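(* Let $\mathcal{T}=(V,A,E,f,q,v_0)$ be a decorated pseudo-rooted tree such that $f(\alpha)=1$ for all $\alpha\in A\setminus A_0$. Then $M(\mathcal{T}_\alpha)-M_\alpha(\mathcal{T})=I(\alpha)$ for every $\alpha\in A\setminus A_0$.
   Context: A graph is a pair $(X_0,X_1)$ of finite sets such that each element of $X_1$ (an edge) is a $2$-element subset of $X_0$; elements of $X_0$ are cells. The valency $\delta_x$ of a cell is the number of edges containing it. A path is a tuple $(x_0,\dots,x_n)$ ($n\ge0$) of cells with $\{x_i,x_{i+1}\}$ an edge for each $i<n$, these edges pairwise distinct; a cell/edge is in the path if it is some $x_i$ / some $\{x_i,x_{i+1}\}$. The graph is a tree if any two cells $x,y$ are joined by a unique path $\gamma_{x,y}$. A decorated tree is $(V,A,E,f,q)$ with $V$ (vertices), $A$ (arrows) finite disjoint sets, $(V\cup A,E)$ a tree, every arrow of valency $1$, $f:A\to\mathbb{Z}$, $q(e,x)\in\mathbb{Z}$ for each $e\in E$, $x\in e$, with $q(e,\alpha)=1$ for $\alpha\in A$, and for each $v\in V$ and distinct edges $e,e'\ni v$, $\gcd(q(e,v),q(e',v))=1$. $A_0=\{\alpha\in A:f(\alpha)=0\}$. An edge $\varepsilon$ is incident to a path $\gamma$ if it is not in $\gamma$ but contains a cell $u$ of $\gamma$; $q(\varepsilon,\gamma):=q(\varepsilon,u)$. For $v\ne\alpha$, $v\in V\cup A$, $\alpha\in A$: $x_{v,\alpha}=f(\alpha)\prod_\varepsilon q(\varepsilon,\gamma_{v,\alpha})$ over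 edges incident to $\gamma_{v,\alpha}$ (empty product $=1$). For $v\in V\cup A_0$, $N_v=\sum_{\alpha\in A\setminus A_0}x_{v,\alpha}$; $M(\mathcal{T})=-\sum_{v\in V\cup A_0}N_v(\delta_v-2)$. For $\alpha\in A\setminus A_0$, $M_\alpha(\mathcal{T})=-\sum_{v\in V\cup A_0}x_{v,\alpha}(\delta_v-2)$. For a path $\gamma=(x_0,\dots,x_n)$, $n>0$, and a cell $u$ of $\gamma$, $Q(\gamma,u)=\prod q(\varepsilon,u)$ over edges $\varepsilon\ni u$ not in $\gamma$; $Q^*(\gamma)=\prod_{0<i<n}Q(\gamma,x_i)$. For $\alpha\in A\setminus A_0$, $I(\alpha)=\sum_{\beta\in(A\setminus A_0)\setminus\{\alpha\}}Q^*(\gamma_{\alpha,\beta})f(\alpha)f(\beta)$. A pseudo-root of $(V,A,E,f,q)$ is a vertex $v_0$ with $q(e,v_0)=1$ for all edges $e\ni v_0$, such that for every $v\in V\setminus\{v_0\}$ at most one edge $e\ni v$ not in $\gamma_{v_0,v}$ has $q(e,v)\ne1$. A decorated pseudo-rooted tree is $(V,A,E,f,q,v_0)$ with $v_0$ a pseudo-root. For nonempty $X\subseteq A\setminus A_0$, $\mathcal{T}_X$: let $\mathcal{T}'_X$ have arrow set $X$, vertices those of $\mathcal{T}$ on some $\gamma_{v_0,\alpha}$ ($\alpha\in X$), edges those of $\mathcal{T}$ in some $\gamma_{v_0,\alpha}$ ($\alpha\in X$), decorations as in $\mathcal{T}$; for each vertex $v$ of $\mathcal{T}'_X$ put $b_v=\prod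 q(e,v)$ over edges $e$ of $\mathcal{T}$ containing $v$ not in $\mathcal{T}'_X$, and if $b_v\ne1$ add an arrow $\alpha_v$ with $f(\alpha_v)=0$ and edge $\{v,\alpha_v\}$ decorated $b_v$ near $v$, $1$ near $\alpha_v$. The result, pseudo-rooted at $v_0$, is $\mathcal{T}_X$; $\mathcal{T}_\alpha:=\mathcal{T}_{\{\alpha\}}$. *)

theory Defs
  imports Main
begin

definition is_graph :: "'a set \<Rightarrow> 'a set set \<Rightarrow> bool" where
  "is_graph X0 X1 \<longleftrightarrow> finite X0 \<and> finite X1 \<and> (\<forall>e\<in>X1. e \<subseteq> X0 \<and> card e = 2)"

definition valency :: "'a set set \<Rightarrow> 'a \<Rightarrow> int" where
  "valency X1 x = int (card {e\<in>X1. x \<in> e})"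

definition path_edges :: "'a list \<Rightarrow> 'a set list" where
  "path_edges xs = map (\<lambda>i. {xs ! i, xs ! Suc i}) [0..<length xs - 1]"

definition is_path :: "'a set \<Rightarrow> 'a set set \<Rightarrow> 'a list \<Rightarrow> bool" where
  "is_path X0 X1 xs \<longleftrightarrow> xs \<noteq> [] \<and> set xs \<subseteq> X0 \<and>
     set (path_edges xs) \<subseteq> X1 \<and> distinct (path_edges xs)"

definition is_tree :: "'a set \<Rightarrow> 'a set set \<Rightarrow> bool" where
  "is_tree X0 X1 \<longleftrightarrow> is_graph X0 X1 \<and>
     (\<forall>x\<in>X0. \<forall>y\<in>X0. \<exists>!p. is_path X0 X1 p \<and> hd p = x \<and> last p = y)"

definition gpath :: "'a set \<Rightarrow> 'a set set \<Rightarrow> 'a \<Rightarrow> 'a \<Rightarrow> 'a list" where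
  "gpath X0 X1 x y = (THE p. is_path X0 X1 p \<and> hd p = x \<and> last p = y)"

definition decorated_tree ::
  "'a set \<Rightarrow> 'a set \<Rightarrow> 'a set set \<Rightarrow> ('a \<Rightarrow> int) \<Rightarrow> ('a set \<Rightarrow> 'a \<Rightarrow> int) \<Rightarrow> bool" where
  "decorated_tree V A E f q \<longleftrightarrow>
     finite V \<and> finite A \<and> V \<inter> A = {} \<and> is_tree (V \<union> A) E \<and>
     (\<forall>\<alpha>\<in>A. valency E \<alpha> = 1) \<and>
     (\<forall>e\<in>E. \<forall>\<alpha>\<in>A. \<alpha> \<in> e \<longrightarrow> q e \<alpha> = 1) \<and>
     (\<forall>v\<in>V. \<forall>e\<in>E. \<forall>e'\<in>E. v \<in> e \<and> v \<in> e' \<and> e \<noteq> e' \<longrightarrow> gcd (q e v) (q e' v) = 1)"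

definition A0 :: "'a set \<Rightarrow> ('a \<Rightarrow> int) \<Rightarrow> 'a set" where
  "A0 A f = {\<alpha>\<in>A. f \<alpha> = 0}"

definition incident_edges :: "'a set set \<Rightarrow> 'a list \<Rightarrow> 'a set set" where
  "incident_edges E \<gamma> = {\<epsilon>\<in>E. \<epsilon> \<notin> set (path_edges \<gamma>) \<and> (\<exists>u\<in>set \<gamma>. u \<in> \<epsilon>)}"

definition q_path :: "('a set \<Rightarrow> 'a \<Rightarrow> int) \<Rightarrow> 'a set \<Rightarrow> 'a list \<Rightarrow> int" where
  "q_path q \<epsilon> \<gamma> = q \<epsilon> (THE u. u \<in> set \<gamma> \<and> u \<in> \<epsilon>)"

definition xval ::
  "'a set \<Rightarrow> 'a set \<Rightarrow> 'a set set \<Rightarrow> ('a \<Rightarrow> int) \<Rightarrow> ('a set \<Rightarrow> 'a \<Rightarrow> int) \<Rightarrow> 'a \<Rightarrow> 'a \<Rightarrow> int" where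
  "xval V A E f q v \<alpha> =
     (let \<gamma> = gpath (V \<union> A) E v \<alpha> in f \<alpha> * (\<Prod>\<epsilon>\<in>incident_edges E \<gamma>. q_path q \<epsilon> \<gamma>))"

definition Nval ::
  "'a set \<Rightarrow> 'a set \<Rightarrow> 'a set set \<Rightarrow> ('a \<Rightarrow> int) \<Rightarrow> ('a set \<Rightarrow> 'a \<Rightarrow> int) \<Rightarrow> 'a \<Rightarrow> int" where
  "Nval V A E f q v = (\<Sum>\<alpha>\<in>A - A0 A f. xval V A E f q v \<alpha>)"

definition Mval ::
  "'a set \<Rightarrow> 'a set \<Rightarrow> 'a set set \<Rightarrow> ('a \<Rightarrow> int) \<Rightarrow> ('a set \<Rightarrow> 'a \<Rightarrow> int) \<Rightarrow> int" where
  "Mval V A E f q = - (\<Sum>v\<in>V \<union> A0 A f. Nval V A E f q v * (valency E v - 2))"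

definition Malpha ::
  "'a set \<Rightarrow> 'a set \<Rightarrow> 'a set set \<Rightarrow> ('a \<Rightarrow> int) \<Rightarrow> ('a set \<Rightarrow> 'a \<Rightarrow> int) \<Rightarrow> 'a \<Rightarrow> int" where
  "Malpha V A E f q \<alpha> = - (\<Sum>v\<in>V \<union> A0 A f. xval V A E f q v \<alpha> * (valency E v - 2))"

definition Qcell :: "'a set set \<Rightarrow> ('a set \<Rightarrow> 'a \<Rightarrow> int) \<Rightarrow> 'a list \<Rightarrow> 'a \<Rightarrow> int" where
  "Qcell E q \<gamma> u = (\<Prod>\<epsilon>\<in>{\<epsilon>\<in>E. u \<in> \<epsilon> \<and> \<epsilon> \<notin> set (path_edges \<gamma>)}. q \<epsilon> u)"

definition Qstar :: "'a set set \<Rightarrow> ('a set \<Rightarrow> 'a \<Rightarrow> int) \<Rightarrow> 'a list \<Rightarrow> int" where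
  "Qstar E q \<gamma> = (\<Prod>i\<in>{1..<length \<gamma> - 1}. Qcell E q \<gamma> (\<gamma> ! i))"

definition Ival ::
  "'a set \<Rightarrow> 'a set \<Rightarrow> 'a set set \<Rightarrow> ('a \<Rightarrow> int) \<Rightarrow> ('a set \<Rightarrow> 'a \<Rightarrow> int) \<Rightarrow> 'a \<Rightarrow> int" where
  "Ival V A E f q \<alpha> =
     (\<Sum>\<beta>\<in>(A - A0 A f) - {\<alpha>}. Qstar E q (gpath (V \<union> A) E \<alpha> \<beta>) * f \<alpha> * f \<beta>)"

definition pseudo_root ::
  "'a set \<Rightarrow> 'a set \<Rightarrow> 'a set set \<Rightarrow> ('a set \<Rightarrow> 'a \<Rightarrow> int) \<Rightarrow> 'a \<Rightarrow> bool" where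
  "pseudo_root V A E q v0 \<longleftrightarrow> v0 \<in> V \<and> (\<forall>e\<in>E. v0 \<in> e \<longrightarrow> q e v0 = 1) \<and>
     (\<forall>v\<in>V - {v0}. card {e\<in>E. v \<in> e \<and> e \<notin> set (path_edges (gpath (V \<union> A) E v0 v)) \<and> q e v \<noteq> 1} \<le> 1)"

definition decorated_pseudo_rooted_tree ::
  "'a set \<Rightarrow> 'a set \<Rightarrow> 'a set set \<Rightarrow> ('a \<Rightarrow> int) \<Rightarrow> ('a set \<Rightarrow> 'a \<Rightarrow> int) \<Rightarrow> 'a \<Rightarrow> bool" where
  "decorated_pseudo_rooted_tree V A E f q v0 \<longleftrightarrow>
     decorated_tree V A E f q \<and> pseudo_root V A E q v0"

text \<open>T_X lives on the cell type 'a + 'a: Inl c is the cell c of T, and Inr v is the new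
  arrow alpha_v attached to the vertex v (present iff b_v \<noteq> 1).\<close>

definition sub_vertices :: "'a set \<Rightarrow> 'a set \<Rightarrow> 'a set set \<Rightarrow> 'a \<Rightarrow> 'a set \<Rightarrow> 'a set" where
  "sub_vertices V A E v0 X = {v\<in>V. \<exists>\<alpha>\<in>X. v \<in> set (gpath (V \<union> A) E v0 \<alpha>)}"

definition sub_edges :: "'a set \<Rightarrow> 'a set \<Rightarrow> 'a set set \<Rightarrow> 'a \<Rightarrow> 'a set \<Rightarrow> 'a set set" where
  "sub_edges V A E v0 X = {e\<in>E. \<exists>\<alpha>\<in>X. e \<in> set (path_edges (gpath (V \<union> A) E v0 \<alpha>))}"

definition bval :: "'a set \<Rightarrow> 'a set \<Rightarrow> 'a set set \<Rightarrow> ('a set \<Rightarrow> 'a \<Rightarrow> int) \<Rightarrow> 'a \<Rightarrow> 'a set \<Rightarrow> 'a \<Rightarrow> int" where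
  "bval V A E q v0 X v = (\<Prod>e\<in>{e\<in>E. v \<in> e \<and> e \<notin> sub_edges V A E v0 X}. q e v)"

definition new_arrow_vertices :: "'a set \<Rightarrow> 'a set \<Rightarrow> 'a set set \<Rightarrow> ('a set \<Rightarrow> 'a \<Rightarrow> int) \<Rightarrow> 'a \<Rightarrow> 'a set \<Rightarrow> 'a set" where
  "new_arrow_vertices V A E q v0 X = {v\<in>sub_vertices V A E v0 X. bval V A E q v0 X v \<noteq> 1}"

definition TX_V :: "'a set \<Rightarrow> 'a set \<Rightarrow> 'a set set \<Rightarrow> 'a \<Rightarrow> 'a set \<Rightarrow> ('a + 'a) set" where
  "TX_V V A E v0 X = Inl ` sub_vertices V A E v0 X"

definition TX_A :: "'a set \<Rightarrow> 'a set \<Rightarrow> 'a set set \<Rightarrow> ('a set \<Rightarrow> 'a \<Rightarrow> int) \<Rightarrow> 'a \<Rightarrow> 'a set \<Rightarrow> ('a + 'a) set" where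
  "TX_A V A E q v0 X = Inl ` X \<union> Inr ` new_arrow_vertices V A E q v0 X"

definition TX_E :: "'a set \<Rightarrow> 'a set \<Rightarrow> 'a set set \<Rightarrow> ('a set \<Rightarrow> 'a \<Rightarrow> int) \<Rightarrow> 'a \<Rightarrow> 'a set \<Rightarrow> ('a + 'a) set set" where
  "TX_E V A E q v0 X = (image Inl) ` sub_edges V A E v0 X \<union>
     (\<lambda>v. {Inl v, Inr v}) ` new_arrow_vertices V A E q v0 X"

definition TX_f :: "('a \<Rightarrow> int) \<Rightarrow> ('a + 'a) \<Rightarrow> int" where
  "TX_f f x = (case x of Inl c \<Rightarrow> f c | Inr _ \<Rightarrow> 0)"

definition TX_q :: "'a set \<Rightarrow> 'a set \<Rightarrow> 'a set set \<Rightarrow> ('a set \<Rightarrow> 'a \<Rightarrow> int) \<Rightarrow> 'a \<Rightarrow> 'a set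
    \<Rightarrow> ('a + 'a) set \<Rightarrow> ('a + 'a) \<Rightarrow> int" where
  "TX_q V A E q v0 X e x = (case x of
      Inl u \<Rightarrow> (if Inr u \<in> e then bval V A E q v0 X u else q (Inl -` e) u)
    | Inr _ \<Rightarrow> 1)"

end

theory Submission
  imports Defs
begin


lemma pe_Nil[simp]: "path_edges [] = []"
  by (simp add: path_edges_def)
lemma pe_single[simp]: "path_edges [x] = []"
  by (simp add: path_edges_def)
lemma pe_Cons2[simp]: "path_edges (x # y # xs) = {x, y} # path_edges (y # xs)"
  unfolding path_edges_def
  by (simp add: upt_conv_Cons map_Suc_upt[symmetric] del: upt_Suc)

lemma pe_append: "path_edges (xs @ y # ys) = path_edges (xs @ [y]) @ path_edges (y # ys)"
proof (induction xs)
  case Nil then show ?case by simp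
next
  case (Cons a xs)
  then show ?case by (cases xs) auto
qed

lemma pe_rev: "path_edges (rev xs) = rev (path_edges xs)"
proof (induction xs)
  case Nil then show ?case by simp
next
  case (Cons a xs)
  show ?case
  proof (cases xs)
    case Nil then show ?thesis by simp
  next
    case (Cons b ys)
    have "path_edges (rev (a # xs)) = path_edges (rev ys @ b # [a])" using Cons by simp
    also have "\<dots> = path_edges (rev ys @ [b]) @ path_edges [b, a]" by (rule pe_append)
    also have "\<dots> = rev (path_edges xs) @ [{a, b}]"
      using Cons.IH Cons by (simp add: insert_commute)
    finally show ?thesis using Cons by simp
  qed
qed

lemma pe_subset: "e \<in> set (path_edges xs) \<Longrightarrow> e \<subseteq> set xs"
proof (induction xs rule: induct_list012)
  case (3 x y zs) then show ?case by auto
qed auto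

lemma pe_distinct: "distinct xs \<Longrightarrow> distinct (path_edges xs)"
proof (induction xs rule: induct_list012)
  case (3 x y zs)
  then show ?case using pe_subset[of "{x,y}" "y # zs"] by auto
qed auto

lemma pe_Cons_nonempty: "xs \<noteq> [] \<Longrightarrow> path_edges (x # xs) = {x, hd xs} # path_edges xs"
  by (cases xs) auto

lemma pe_drop: "path_edges (drop i xs) = drop i (path_edges xs)"
proof (induction i arbitrary: xs)
  case 0 then show ?case by simp
next
  case (Suc i)
  then show ?case
  proof (cases xs)
    case Nil then show ?thesis by simp
  next
    case (Cons a ys)
    then show ?thesis using Suc by (cases ys) auto
  qed
qed

lemma pe_take: "path_edges (take k xs) = take (k - 1) (path_edges xs)"
proof (induction xs arbitrary: k rule: induct_list012)
  case 1 then show ?case by simp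
next
  case (2 x) then show ?case by (cases k) auto
next
  case (3 x y zs)
  show ?case
  proof (cases k)
    case 0 then show ?thesis by simp
  next
    case (Suc k')
    show ?thesis
    proof (cases k')
      case 0 then show ?thesis using Suc by simp
    next
      case (Suc k'')
      have "take k (x # y # zs) = x # y # take k'' zs" using Suc \<open>k = Suc k'\<close> by simp
      then have "path_edges (take k (x # y # zs)) = {x,y} # path_edges (take k' (y # zs))"
        using Suc by simp
      also have "\<dots> = {x,y} # take (k' - 1) (path_edges (y # zs))" using 3(2) by simp
      also have "\<dots> = take (k - 1) (path_edges (x # y # zs))" using Suc \<open>k = Suc k'\<close> by simp
      finally show ?thesis .
    qed
  qed
qed

lemma in_pe_iff: "e \<in> set (path_edges xs) \<longleftrightarrow> (\<exists>i. Suc i < length xs \<and> e = {xs ! i, xs ! Suc i})"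
proof
  assume "e \<in> set (path_edges xs)"
  then obtain i where "i < length xs - 1" "e = {xs ! i, xs ! Suc i}"
    by (auto simp: path_edges_def)
  then show "\<exists>i. Suc i < length xs \<and> e = {xs ! i, xs ! Suc i}" by (intro exI[of _ i]) auto
next
  assume "\<exists>i. Suc i < length xs \<and> e = {xs ! i, xs ! Suc i}"
  then obtain i where "Suc i < length xs" "e = {xs ! i, xs ! Suc i}" by blast
  then show "e \<in> set (path_edges xs)" unfolding path_edges_def
    by (auto intro!: image_eqI[of _ _ i])
qed

definition walk :: "'a set \<Rightarrow> 'a set set \<Rightarrow> 'a list \<Rightarrow> bool" where
  "walk C E p \<longleftrightarrow> p \<noteq> [] \<and> set p \<subseteq> C \<and> set (path_edges p) \<subseteq> E"

lemma is_path_walk: "is_path C E p \<longleftrightarrow> walk C E p \<and> distinct (path_edges p)"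
  unfolding is_path_def walk_def by auto

lemma walk_append: "walk C E (xs @ y # ys) \<longleftrightarrow> walk C E (xs @ [y]) \<and> walk C E (y # ys)"
  unfolding walk_def by (subst pe_append, auto)

lemma path_append: "is_path C E (xs @ y # ys) \<Longrightarrow> is_path C E (xs @ [y]) \<and> is_path C E (y # ys)"
proof -
  assume a: "is_path C E (xs @ y # ys)"
  have "distinct (path_edges (xs @ [y]) @ path_edges (y # ys))"
    using a unfolding is_path_walk by (simp only: pe_append[symmetric])
  moreover have "walk C E (xs @ [y]) \<and> walk C E (y # ys)"
    using a walk_append[of C E xs y ys] unfolding is_path_walk by blast
  ultimately show ?thesis unfolding is_path_walk by simp
qed

lemma walk_Cons2: "walk C E (x # y # xs) \<longleftrightarrow> x \<in> C \<and> {x,y} \<in> E \<and> walk C E (y # xs)"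
  unfolding walk_def by auto



locale tree =
  fixes C :: "'a set" and E :: "'a set set"
  assumes tree: "is_tree C E"
begin

abbreviation gp where "gp x y \<equiv> gpath C E x y"

lemma finC: "finite C" and finE: "finite E"
  using tree unfolding is_tree_def is_graph_def by auto

lemma edge_sub: "e \<in> E \<Longrightarrow> e \<subseteq> C" and edge_card: "e \<in> E \<Longrightarrow> card e = 2"
  using tree unfolding is_tree_def is_graph_def by auto

lemma edge_other: assumes "e \<in> E" "x \<in> e" shows "\<exists>y. y \<noteq> x \<and> e = {x, y}"
proof -
  from edge_card[OF assms(1)] obtain a b where "e = {a,b}" "a \<noteq> b" by (auto simp: card_2_iff)
  then show ?thesis using assms(2) by (auto simp: insert_commute)
qed

lemma gp_path: assumes "x \<in> C" "y \<in> C"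
  shows "is_path C E (gp x y) \<and> hd (gp x y) = x \<and> last (gp x y) = y"
proof -
  have "\<exists>!p. is_path C E p \<and> hd p = x \<and> last p = y" using tree assms unfolding is_tree_def by blast
  then show ?thesis unfolding gpath_def by (rule theI')
qed

lemma path_ne: "is_path C E p \<Longrightarrow> p \<noteq> []" and path_set: "is_path C E p \<Longrightarrow> set p \<subseteq> C"
  unfolding is_path_def by auto

lemma gp_eq: assumes "is_path C E p" "hd p = x" "last p = y" shows "gp x y = p"
proof -
  have "x \<in> C" "y \<in> C" using assms path_ne path_set by (auto dest: hd_in_set last_in_set)
  then have u: "\<exists>!p. is_path C E p \<and> hd p = x \<and> last p = y" using tree unfolding is_tree_def by blast
  show ?thesis unfolding gpath_def by (rule the1_equality[OF u]) (use assms in auto)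
qed

lemma path_distinct: assumes "is_path C E p" shows "distinct p"
proof (rule ccontr)
  assume "\<not> distinct p"
  then obtain xs ys zs y where p: "p = xs @ [y] @ ys @ [y] @ zs" using not_distinct_decomp by blast
  define p' where "p' = xs @ y # zs"
  have pe1: "path_edges p = path_edges (xs @ [y]) @ path_edges (y # ys @ [y]) @ path_edges (y # zs)"
  proof -
    have "p = xs @ y # (ys @ y # zs)" unfolding p by simp
    then have "path_edges p = path_edges (xs @ [y]) @ path_edges (y # ys @ y # zs)"
      using pe_append by metis
    moreover have "path_edges (y # ys @ y # zs) = path_edges ((y # ys) @ [y]) @ path_edges (y # zs)"
      using pe_append[of "y # ys" y zs] by simp
    ultimately show ?thesis by simp
  qed
  have pe2: "path_edges p' = path_edges (xs @ [y]) @ path_edges (y # zs)"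
    unfolding p'_def by (rule pe_append)
  have d: "distinct (path_edges p)" and s: "set (path_edges p) \<subseteq> E" and sp: "set p \<subseteq> C"
    using assms unfolding is_path_def by auto
  have "distinct (path_edges p')" using d unfolding pe1 pe2 by auto
  moreover have "set (path_edges p') \<subseteq> E" using s unfolding pe1 pe2 by auto
  moreover have "set p' \<subseteq> C" using sp unfolding p p'_def by auto
  ultimately have ip: "is_path C E p'" unfolding is_path_def p'_def by simp
  have "hd p' = hd p" unfolding p'_def p by (cases xs) auto
  moreover have "last p' = last p" unfolding p'_def p by (cases zs) auto
  ultimately have "p' = p" using gp_eq[OF ip] gp_eq[OF assms] by metis
  then show False unfolding p'_def p by simp
qed

lemma walk_distinct_path: "walk C E p \<Longrightarrow> distinct p \<Longrightarrow> is_path C E p"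
  unfolding is_path_walk using pe_distinct by blast

lemma walk_gp_subset: "walk C E p \<Longrightarrow> set (gp (hd p) (last p)) \<subseteq> set p"
proof (induction "length p" arbitrary: p rule: less_induct)
  case less
  show ?case
  proof (cases "distinct p")
    case True
    then have "gp (hd p) (last p) = p" using walk_distinct_path less.prems gp_eq by blast
    then show ?thesis by simp
  next
    case False
    then obtain xs ys zs y where p: "p = xs @ [y] @ ys @ [y] @ zs" using not_distinct_decomp by blast
    define p' where "p' = xs @ y # zs"
    have w1: "walk C E (xs @ [y])" "walk C E (y # ys @ y # zs)"
      using less.prems walk_append[of C E xs y "ys @ y # zs"] unfolding p by auto
    have w2: "walk C E (y # zs)" using w1(2) walk_append[of C E "y # ys" y zs] by auto
    have "walk C E p'" using w1 w2 walk_append[of C E xs y zs] unfolding p'_def by auto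
    moreover have "hd p' = hd p" unfolding p'_def p by (cases xs) auto
    moreover have "last p' = last p" unfolding p'_def p by (cases zs) auto
    moreover have "length p' < length p" unfolding p'_def p by simp
    ultimately have "set (gp (hd p) (last p)) \<subseteq> set p'" using less.hyps by metis
    also have "set p' \<subseteq> set p" unfolding p'_def p by auto
    finally show ?thesis .
  qed
qed

lemma gp_set: "x \<in> C \<Longrightarrow> y \<in> C \<Longrightarrow> set (gp x y) \<subseteq> C"
  using gp_path path_set by blast

lemma gp_distinct: "x \<in> C \<Longrightarrow> y \<in> C \<Longrightarrow> distinct (gp x y)"
  using gp_path path_distinct by blast

lemma gp_ne: "x \<in> C \<Longrightarrow> y \<in> C \<Longrightarrow> gp x y \<noteq> []"
  using gp_path path_ne by blast

lemma gp_hd: "x \<in> C \<Longrightarrow> y \<in> C \<Longrightarrow> hd (gp x y) = x"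
  and gp_last: "x \<in> C \<Longrightarrow> y \<in> C \<Longrightarrow> last (gp x y) = y"
  using gp_path by blast+

lemma path_rev: "is_path C E p \<Longrightarrow> is_path C E (rev p)"
  unfolding is_path_def by (simp add: pe_rev)

lemma gp_rev: assumes "x \<in> C" "y \<in> C" shows "gp y x = rev (gp x y)"
proof -
  have "is_path C E (rev (gp x y))" using path_rev gp_path assms by blast
  moreover have "hd (rev (gp x y)) = y" "last (rev (gp x y)) = x"
    using gp_path[OF assms] gp_ne[OF assms] by (auto simp: hd_rev last_rev)
  ultimately show ?thesis using gp_eq by blast
qed

lemma gp_split: assumes "x \<in> C" "y \<in> C" "gp x y = xs @ u # ys"
  shows "gp u y = u # ys" "gp x u = xs @ [u]"
proof -
  have p: "is_path C E (xs @ [u])" "is_path C E (u # ys)"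
    using path_append gp_path[OF assms(1,2)] assms(3) by metis+
  have "last (u # ys) = y" using gp_last[OF assms(1,2)] assms(3) by (cases ys) auto
  then show "gp u y = u # ys" using gp_eq p(2) by simp
  have "hd (xs @ [u]) = x" using gp_hd[OF assms(1,2)] assms(3) by (cases xs) auto
  then show "gp x u = xs @ [u]" using gp_eq p(1) by simp
qed

lemma gp_refl: "x \<in> C \<Longrightarrow> gp x x = [x]"
  by (rule gp_eq) (auto simp: is_path_def)

lemma edge_path: assumes "{x,y} \<in> E" "x \<noteq> y" shows "is_path C E [x,y]"
  using edge_sub[OF assms(1)] assms unfolding is_path_def by auto

lemma gp_edge: "{x,y} \<in> E \<Longrightarrow> x \<noteq> y \<Longrightarrow> gp x y = [x,y]"
  using edge_path gp_eq by fastforce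

lemma chord: assumes "is_path C E p" "p = xs @ a # ws @ b # ys" "{a,b} \<in> E" "a \<noteq> b"
  shows "ws = []"
proof -
  have "is_path C E (a # ws @ b # ys)" using path_append assms(1,2) by metis
  then have "is_path C E ((a # ws) @ [b])" using path_append[of C E "a # ws" b ys] by simp
  then have "gp a b = a # ws @ [b]" using gp_eq by (cases ws) auto
  moreover have "gp a b = [a,b]" using gp_edge assms by simp
  ultimately show ?thesis by simp
qed

lemma chord2: assumes "is_path C E p" "a \<in> set p" "b \<in> set p" "{a,b} \<in> E" "a \<noteq> b"
  shows "{a,b} \<in> set (path_edges p)"
proof -
  obtain xs ys where p: "p = xs @ a # ys" using split_list assms(2) by metis
  have "b \<in> set xs \<or> b \<in> set ys" using assms(3,5) p by auto
  then show ?thesis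
  proof
    assume "b \<in> set ys"
    then obtain ws zs where ys: "ys = ws @ b # zs" using split_list by metis
    then have "ws = []" using chord assms(1,4,5) p by metis
    then have "p = xs @ a # (b # zs)" using p ys by simp
    then have "path_edges p = path_edges (xs @ [a]) @ path_edges (a # b # zs)" using pe_append by metis
    then show ?thesis by simp
  next
    assume "b \<in> set xs"
    then obtain zs ws where xs: "xs = zs @ b # ws" using split_list by metis
    have "{b,a} \<in> E" using assms(4) by (simp add: insert_commute)
    then have "ws = []" using chord[of p zs b ws a ys] assms(1,5) p xs by auto
    then have "p = zs @ b # (a # ys)" using p xs by simp
    then have "path_edges p = path_edges (zs @ [b]) @ path_edges (b # a # ys)" using pe_append by metis
    then show ?thesis by (simp add: insert_commute)
  qed
qed

lemma chord3: assumes "is_path C E p" "e \<in> E" "e \<notin> set (path_edges p)"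
  "a \<in> set p" "b \<in> set p" "a \<in> e" "b \<in> e" shows "a = b"
proof (rule ccontr)
  assume "a \<noteq> b"
  then have "e = {a,b}" using edge_card[OF assms(2)] assms(6,7)
    by (metis edge_other[OF assms(2) assms(6)] insertE singletonD)
  then show False using chord2 assms \<open>a \<noteq> b\<close> by blast
qed

end



context tree begin

lemma gp_Cons: "x \<in> C \<Longrightarrow> y \<in> C \<Longrightarrow> gp x y = x # tl (gp x y)"
  using gp_ne gp_hd by (metis list.collapse)

lemma path_Cons_edge: "is_path C E (x # y # ys) \<Longrightarrow> {x,y} \<in> E"
  unfolding is_path_def by auto

end

locale rooted = tree +
  fixes r assumes rC: "r \<in> C"
begin

definition par where "par c = hd (tl (gp c r))"
definition desc where "desc c = {w \<in> C. c \<in> set (gp w r)}"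
definition ch where "ch c = {d \<in> C. {c,d} \<in> E \<and> d \<noteq> par c}"

lemma par_props: assumes "c \<in> C" "c \<noteq> r"
  shows "gp c r = c # gp (par c) r" "par c \<in> C" "{c, par c} \<in> E" "par c \<noteq> c"
proof -
  have g: "gp c r = c # tl (gp c r)" using gp_Cons assms rC by blast
  have "tl (gp c r) \<noteq> []"
  proof
    assume "tl (gp c r) = []"
    then have "last (gp c r) = c" using g by (metis last_ConsL)
    then show False using gp_last assms rC by simp
  qed
  then obtain u ys where t: "tl (gp c r) = u # ys" by (cases "tl (gp c r)") auto
  have pu: "par c = u" unfolding par_def t by simp
  have "gp u r = u # ys" using gp_split(1)[of c r "[c]" u ys] assms rC g t by simp
  then show "gp c r = c # gp (par c) r" using g t pu by simp
  have gs: "set (gp c r) \<subseteq> C" using gp_set assms rC by blast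
  then show "par c \<in> C" using g t pu by auto
  have "is_path C E (c # u # ys)" using gp_path assms rC g t by metis
  then show "{c, par c} \<in> E" using pu path_Cons_edge by blast
  have "distinct (c # u # ys)" using gp_distinct assms rC g t by metis
  then show "par c \<noteq> c" using pu by auto
qed

lemma c_in_gp: "c \<in> C \<Longrightarrow> y \<in> C \<Longrightarrow> c \<in> set (gp c y)"
proof -
  assume a: "c \<in> C" "y \<in> C"
  have "gp c y = c # tl (gp c y)" using gp_Cons a by blast
  then show ?thesis by (metis list.set_intros(1))
qed

lemma c_in_desc: "c \<in> C \<Longrightarrow> c \<in> desc c"
  unfolding desc_def using c_in_gp rC by blast

lemma desc_sub: "desc c \<subseteq> C" unfolding desc_def by auto

lemma ch_sub: "ch c \<subseteq> C" unfolding ch_def by auto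

lemma ch_gp: assumes "c \<in> C" "d \<in> ch c" shows "gp d r = d # gp c r"
proof -
  have dC: "d \<in> C" and e: "{c,d} \<in> E" and dp: "d \<noteq> par c" using assms unfolding ch_def by auto
  have dc: "d \<noteq> c" using edge_card[OF e] by (cases "c = d") auto
  have nd: "d \<notin> set (gp c r)"
  proof
    assume din: "d \<in> set (gp c r)"
    have cin: "c \<in> set (gp c r)" using c_in_gp assms rC by blast
    have ce: "{c,d} \<in> set (path_edges (gp c r))" using chord2[OF _ cin din e] gp_path assms rC dc by blast
    show False
    proof (cases "c = r")
      case True
      then show False using ce gp_refl assms by simp
    next
      case False
      then have g: "gp c r = c # gp (par c) r" using par_props assms by blast
      have pn: "gp (par c) r \<noteq> []" using gp_ne par_props assms rC False by blast
      have "path_edges (gp c r) = {c, par c} # path_edges (gp (par c) r)"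
        using g pe_Cons_nonempty[OF pn] gp_hd[of "par c" r] par_props assms rC False by simp
      moreover have "c \<notin> set (gp (par c) r)" using gp_distinct[of c r] assms rC g by simp
      ultimately have "{c,d} = {c, par c}"
      proof -
        assume h: "path_edges (gp c r) = {c, par c} # path_edges (gp (par c) r)" "c \<notin> set (gp (par c) r)"
        show "{c,d} = {c, par c}"
        proof (rule ccontr)
          assume "{c,d} \<noteq> {c, par c}"
          then have "{c,d} \<in> set (path_edges (gp (par c) r))" using ce h(1) by simp
          then have "{c,d} \<subseteq> set (gp (par c) r)" by (rule pe_subset)
          then show False using h(2) by simp
        qed
      qed
      then show False using dp dc by (metis doubleton_eq_iff)
    qed
  qed
  have gc: "gp c r = c # tl (gp c r)" using gp_Cons[of c r] assms rC by blast
  have "walk C E (gp c r)" using gp_path[of c r] assms rC unfolding is_path_walk by blast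
  then have "walk C E (c # tl (gp c r))" using gc by simp
  then have "walk C E (d # c # tl (gp c r))" using dC e walk_Cons2[of C E d c "tl (gp c r)"] by (simp add: insert_commute)
  then have w: "walk C E (d # gp c r)" by (simp only: gc[symmetric])
  have "distinct (d # gp c r)" using nd gp_distinct assms rC by simp
  then have "is_path C E (d # gp c r)" using walk_distinct_path w by blast
  moreover have "last (d # gp c r) = r" using gp_last[of c r] gp_ne[of c r] assms rC by simp
  ultimately show ?thesis using gp_eq by simp
qed

lemma ch_desc_sub: assumes "c \<in> C" "d \<in> ch c" shows "desc d \<subseteq> desc c"
proof
  fix w assume w: "w \<in> desc d"
  then have wC: "w \<in> C" and din: "d \<in> set (gp w r)" unfolding desc_def by auto
  obtain xs ys where s: "gp w r = xs @ d # ys" using split_list din by metis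
  have "gp d r = d # ys" using gp_split(1)[OF wC rC s] .
  then have "ys = gp c r" using ch_gp assms by simp
  then have "c \<in> set (gp w r)" using s gp_Cons[of c r] assms rC by (metis Un_iff list.set_intros(1) set_append set_subset_Cons subsetD)
  then show "w \<in> desc c" using wC unfolding desc_def by auto
qed

lemma ch_not_desc: assumes "c \<in> C" "d \<in> ch c" shows "c \<notin> desc d"
proof
  assume "c \<in> desc d"
  then have "d \<in> set (gp c r)" unfolding desc_def by auto
  moreover have "distinct (gp d r)" using gp_distinct assms ch_sub rC by blast
  ultimately show False using ch_gp assms by simp
qed

lemma desc_split: assumes "c \<in> C" "c \<noteq> r" "w \<in> desc c" "w \<noteq> c"
  shows "\<exists>d\<in>ch c. w \<in> desc d"
proof -
  have wC: "w \<in> C" and cin: "c \<in> set (gp w r)" using assms(3) unfolding desc_def by auto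
  obtain xs ys where s: "gp w r = xs @ c # ys" using split_list cin by metis
  have xsne: "xs \<noteq> []" using s gp_hd[OF wC rC] assms(4) by (cases xs) auto
  then obtain xs' d where xs: "xs = xs' @ [d]" by (metis rev_exhaust)
  have s2: "gp w r = xs' @ d # (c # ys)" using s xs by simp
  have gd: "gp d r = d # c # ys" using gp_split(1)[OF wC rC s2] .
  have gc: "gp c r = c # ys" using gp_split(1)[OF wC rC s] .
  have dC: "d \<in> C" using gp_set[OF wC rC] s2 by auto
  have e: "{d,c} \<in> E" using gp_path[OF dC rC] gd path_Cons_edge by metis
  have "par c = hd ys" unfolding par_def gc by simp
  moreover have "ys \<noteq> []" using gc gp_last[OF assms(1) rC] assms(2) by auto
  moreover have "distinct (d # c # ys)" using gp_distinct[OF dC rC] gd by simp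
  ultimately have "d \<noteq> par c" by (cases ys) auto
  then have "d \<in> ch c" using dC e unfolding ch_def by (simp add: insert_commute)
  moreover have "w \<in> desc d" using wC s2 unfolding desc_def by auto
  ultimately show ?thesis by blast
qed

lemma ch_desc_disj: assumes "c \<in> C" "d1 \<in> ch c" "d2 \<in> ch c" "w \<in> desc d1" "w \<in> desc d2"
  shows "d1 = d2"
proof -
  have wC: "w \<in> C" using assms(4) desc_sub by auto
  have gc: "gp c r = c # tl (gp c r)" using gp_Cons assms(1) rC by blast
  have key: "\<exists>xs. gp w c = xs @ [d, c]" if "d \<in> ch c" "w \<in> desc d" for d
  proof -
    have "d \<in> set (gp w r)" using that unfolding desc_def by auto
    then obtain xs ys where s: "gp w r = xs @ d # ys" using split_list by metis
    have "gp d r = d # ys" using gp_split(1)[OF wC rC s] .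
    then have "ys = c # tl (gp c r)" using ch_gp[OF assms(1) that(1)] gc by simp
    then have "gp w r = (xs @ [d]) @ c # tl (gp c r)" using s by simp
    then have "gp w c = (xs @ [d]) @ [c]" using gp_split(2)[OF wC rC] by blast
    then show ?thesis by auto
  qed
  obtain xs1 where "gp w c = xs1 @ [d1, c]" using key assms by blast
  moreover obtain xs2 where "gp w c = xs2 @ [d2, c]" using key assms by blast
  ultimately have "xs1 @ [d1, c] = xs2 @ [d2, c]" by simp
  then have "rev (xs1 @ [d1, c]) = rev (xs2 @ [d2, c])" by simp
  then show ?thesis by simp
qed

lemma finite_desc: "finite (desc c)" using finite_subset[OF desc_sub finC] .
lemma finite_ch: "finite (ch c)" using finite_subset[OF ch_sub finC] .

lemma desc_eq: assumes "c \<in> C" "c \<noteq> r"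
  shows "desc c = insert c (\<Union>d\<in>ch c. desc d)"
proof
  show "desc c \<subseteq> insert c (\<Union>d\<in>ch c. desc d)" using desc_split assms by blast
  show "insert c (\<Union>d\<in>ch c. desc d) \<subseteq> desc c"
    using c_in_desc assms ch_desc_sub by blast
qed

lemma desc_sum: assumes "c \<in> C" "c \<noteq> r"
  shows "(\<Sum>w\<in>desc c. h w) = h c + (\<Sum>d\<in>ch c. \<Sum>w\<in>desc d. h w)"
proof -
  have "c \<notin> (\<Union>d\<in>ch c. desc d)" using ch_not_desc assms by blast
  then have "(\<Sum>w\<in>desc c. h w) = h c + (\<Sum>w\<in>(\<Union>d\<in>ch c. desc d). h w)"
    using desc_eq[OF assms] finite_desc finite_ch by (simp add: sum.insert)
  also have "(\<Sum>w\<in>(\<Union>d\<in>ch c. desc d). h w) = (\<Sum>d\<in>ch c. \<Sum>w\<in>desc d. h w)"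
    by (rule sum.UNION_disjoint) (use finite_desc finite_ch ch_desc_disj assms in blast)+
  finally show ?thesis .
qed

lemma edges_at: assumes "c \<in> C" "c \<noteq> r"
  shows "{e\<in>E. c \<in> e} = insert {c, par c} ((\<lambda>d. {c,d}) ` ch c)"
    and "{c, par c} \<notin> (\<lambda>d. {c,d}) ` ch c"
    and "inj_on (\<lambda>d. {c,d}) (ch c)"
proof -
  show "{e\<in>E. c \<in> e} = insert {c, par c} ((\<lambda>d. {c,d}) ` ch c)"
  proof
    show "{e\<in>E. c \<in> e} \<subseteq> insert {c, par c} ((\<lambda>d. {c,d}) ` ch c)"
    proof
      fix e assume e: "e \<in> {e\<in>E. c \<in> e}"
      then obtain d where d: "d \<noteq> c" "e = {c,d}" using edge_other by blast
      have "d \<in> C" using edge_sub e d by auto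
      then show "e \<in> insert {c, par c} ((\<lambda>d. {c,d}) ` ch c)"
        using e d unfolding ch_def by auto
    qed
    show "insert {c, par c} ((\<lambda>d. {c,d}) ` ch c) \<subseteq> {e\<in>E. c \<in> e}"
      using par_props[OF assms] unfolding ch_def by auto
  qed
  show "{c, par c} \<notin> (\<lambda>d. {c,d}) ` ch c"
    unfolding ch_def by (auto simp: doubleton_eq_iff)
  show "inj_on (\<lambda>d. {c,d}) (ch c)"
    unfolding inj_on_def by (auto simp: doubleton_eq_iff)
qed

lemma valency_ch: assumes "c \<in> C" "c \<noteq> r"
  shows "valency E c = int (card (ch c)) + 1"
proof -
  have "card {e\<in>E. c \<in> e} = Suc (card ((\<lambda>d. {c,d}) ` ch c))"
    using edges_at[OF assms] finite_ch by (simp add: card_insert_if)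
  also have "\<dots> = Suc (card (ch c))" using card_image edges_at(3)[OF assms] by metis
  finally show ?thesis unfolding valency_def by simp
qed

end



lemma inc_prod:
  assumes "finite E"
    and uniq: "\<And>\<epsilon> a b. \<epsilon> \<in> E \<Longrightarrow> \<epsilon> \<notin> set (path_edges \<gamma>) \<Longrightarrow> a \<in> set \<gamma> \<Longrightarrow> b \<in> set \<gamma> \<Longrightarrow> a \<in> \<epsilon> \<Longrightarrow> b \<in> \<epsilon> \<Longrightarrow> a = b"
  shows "(\<Prod>\<epsilon>\<in>incident_edges E \<gamma>. q_path q \<epsilon> \<gamma>) = (\<Prod>u\<in>set \<gamma>. Qcell E q \<gamma> u)"
proof -
  define S where "S u = {\<epsilon>\<in>E. u \<in> \<epsilon> \<and> \<epsilon> \<notin> set (path_edges \<gamma>)}" for u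
  have inc: "incident_edges E \<gamma> = (\<Union>u\<in>set \<gamma>. S u)"
    unfolding incident_edges_def S_def by auto
  have "(\<Prod>\<epsilon>\<in>(\<Union>u\<in>set \<gamma>. S u). q_path q \<epsilon> \<gamma>) = (\<Prod>u\<in>set \<gamma>. \<Prod>\<epsilon>\<in>S u. q_path q \<epsilon> \<gamma>)"
  proof (rule prod.UNION_disjoint)
    show "\<forall>i\<in>set \<gamma>. finite (S i)" unfolding S_def using assms(1) by auto
    show "\<forall>i\<in>set \<gamma>. \<forall>j\<in>set \<gamma>. i \<noteq> j \<longrightarrow> S i \<inter> S j = {}"
      unfolding S_def using uniq by blast
  qed simp
  also have "\<dots> = (\<Prod>u\<in>set \<gamma>. Qcell E q \<gamma> u)"
  proof (rule prod.cong[OF refl])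
    fix u assume u: "u \<in> set \<gamma>"
    have "q_path q \<epsilon> \<gamma> = q \<epsilon> u" if "\<epsilon> \<in> S u" for \<epsilon>
    proof -
      have "(THE u'. u' \<in> set \<gamma> \<and> u' \<in> \<epsilon>) = u"
        using that u uniq unfolding S_def by (intro the_equality) blast+
      then show ?thesis unfolding q_path_def by simp
    qed
    then show "(\<Prod>\<epsilon>\<in>S u. q_path q \<epsilon> \<gamma>) = Qcell E q \<gamma> u"
      unfolding Qcell_def S_def by (intro prod.cong) auto
  qed
  finally show ?thesis using inc by simp
qed

lemma alg:
  fixes g :: "'b \<Rightarrow> int"
  assumes "finite S" "\<And>e e'. e \<in> S \<Longrightarrow> e' \<in> S \<Longrightarrow> g e \<noteq> 1 \<Longrightarrow> g e' \<noteq> 1 \<Longrightarrow> e = e'"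
  shows "(int (card S) - 1) * prod g S - (\<Sum>e\<in>S. prod g (S - {e})) = -1"
proof (cases "\<forall>e\<in>S. g e = 1")
  case True
  then have "prod g S = 1" "\<And>e. prod g (S - {e}) = 1" by auto
  then show ?thesis by simp
next
  case False
  then obtain e0 where e0: "e0 \<in> S" "g e0 \<noteq> 1" by auto
  have one: "g e = 1" if "e \<in> S" "e \<noteq> e0" for e using assms(2) e0 that by blast
  have p1: "prod g (S - {e0}) = 1" using one by (intro prod.neutral) auto
  have pS: "prod g S = g e0" using prod.remove[OF assms(1) e0(1), of g] p1 by simp
  have p2: "prod g (S - {e}) = g e0" if "e \<in> S - {e0}" for e
  proof -
    have "prod g (S - {e}) = g e0 * prod g (S - {e} - {e0})"
      using prod.remove[of "S - {e}" e0 g] assms(1) e0 that by auto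
    moreover have "prod g (S - {e} - {e0}) = 1" using one by (intro prod.neutral) auto
    ultimately show ?thesis by simp
  qed
  have "(\<Sum>e\<in>S. prod g (S - {e})) = prod g (S - {e0}) + (\<Sum>e\<in>S - {e0}. prod g (S - {e}))"
    using sum.remove[OF assms(1) e0(1)] by simp
  also have "\<dots> = 1 + (\<Sum>e\<in>S - {e0}. g e0)" using p1 p2 by simp
  also have "\<dots> = 1 + (int (card S) - 1) * g e0"
  proof -
    have "card S \<ge> 1" using e0(1) assms(1) card_0_eq by fastforce
    then show ?thesis using e0(1) assms(1) by (simp add: card_Diff_singleton of_nat_diff)
  qed
  finally show ?thesis using pS by (simp add: algebra_simps)
qed



lemma Qcell_eqI:
  assumes "\<And>e. e \<in> E \<Longrightarrow> u \<in> e \<Longrightarrow> e \<in> set (path_edges \<gamma>') \<longleftrightarrow> e \<in> set (path_edges \<gamma>)"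
  shows "Qcell E q \<gamma>' u = Qcell E q \<gamma> u"
  unfolding Qcell_def using assms by (intro prod.cong) auto

context tree begin

lemma edge_at_start: assumes "x \<in> C" "y \<in> C" "x \<noteq> y" "e \<in> set (path_edges (gp x y))" "x \<in> e"
  shows "e = {x, hd (tl (gp x y))}"
proof -
  have g: "gp x y = x # tl (gp x y)" using gp_Cons assms by blast
  have t: "tl (gp x y) \<noteq> []"
  proof
    assume "tl (gp x y) = []"
    then have "last (gp x y) = x" using g by (metis last_ConsL)
    then show False using gp_last assms by simp
  qed
  have pe: "path_edges (gp x y) = {x, hd (tl (gp x y))} # path_edges (tl (gp x y))"
    using pe_Cons_nonempty[OF t] g by metis
  have "x \<notin> set (tl (gp x y))" using gp_distinct[OF assms(1,2)] g by (metis distinct.simps(2))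
  then have "e \<notin> set (path_edges (tl (gp x y)))" using pe_subset assms(5) by blast
  then show ?thesis using assms(4) pe by simp
qed

end

locale setting = rooted C E r for C :: "'a set" and E r +
  fixes V A :: "'a set" and q :: "'a set \<Rightarrow> 'a \<Rightarrow> int" and v0 :: 'a
  assumes CVA: "C = V \<union> A" and VA: "V \<inter> A = {}" and rA: "r \<in> A"
    and arr_val: "\<And>a. a \<in> A \<Longrightarrow> valency E a = 1"
    and arr_q: "\<And>e a. e \<in> E \<Longrightarrow> a \<in> A \<Longrightarrow> a \<in> e \<Longrightarrow> q e a = 1"
    and v0V: "v0 \<in> V" and v0q: "\<And>e. e \<in> E \<Longrightarrow> v0 \<in> e \<Longrightarrow> q e v0 = 1"
    and pr: "\<And>v. v \<in> V - {v0} \<Longrightarrow> card {e\<in>E. v \<in> e \<and> e \<notin> set (path_edges (gp v0 v)) \<and> q e v \<noteq> 1} \<le> 1"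
begin

definition mp where "mp = gp v0 r"
definition Xv where "Xv c = (\<Prod>u\<in>set (gp c r). Qcell E q (gp c r) u)"
definition Rv where "Rv c = (\<Prod>u\<in>set (tl (gp c r)). Qcell E q (gp c r) u)"

lemma v0C: "v0 \<in> C" using v0V CVA by auto

lemma r_mp: "r \<in> set mp" unfolding mp_def using gp_last[OF v0C rC] gp_ne[OF v0C rC] last_in_set by metis
lemma v0_mp: "v0 \<in> set mp" unfolding mp_def using c_in_gp v0C rC by blast

lemma X_split: assumes "c \<in> C" shows "Xv c = Qcell E q (gp c r) c * Rv c"
proof -
  have g: "gp c r = c # tl (gp c r)" using gp_Cons assms rC by blast
  have "c \<notin> set (tl (gp c r))" using gp_distinct[OF assms rC] g by (metis distinct.simps(2))
  then show ?thesis unfolding Xv_def Rv_def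
    by (subst g, simp only: list.set(2), subst prod.insert) auto
qed

lemma pe_at_c: assumes "c \<in> C" "c \<noteq> r" "e \<in> set (path_edges (gp c r))" "c \<in> e"
  shows "e = {c, par c}"
  using edge_at_start[OF assms(1) rC assms(2-4)] par_def by simp

lemma R_child: assumes "c \<in> C" "d \<in> ch c"
  shows "Rv d = Qcell E q (d # gp c r) c * Rv c"
proof -
  have gd: "gp d r = d # gp c r" using ch_gp assms by blast
  have g: "gp c r = c # tl (gp c r)" using gp_Cons assms rC by blast
  have dist: "distinct (d # gp c r)" using gp_distinct[of d r] gd ch_sub assms rC by (metis subsetD)
  have cn: "c \<notin> set (tl (gp c r))" using gp_distinct[OF assms(1) rC] g by (metis distinct.simps(2))
  have "Rv d = (\<Prod>u\<in>set (gp c r). Qcell E q (d # gp c r) u)" unfolding Rv_def gd by simp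
  also have "\<dots> = Qcell E q (d # gp c r) c * (\<Prod>u\<in>set (tl (gp c r)). Qcell E q (d # gp c r) u)"
    using cn by (subst g, simp only: list.set(2), subst prod.insert) auto
  also have "(\<Prod>u\<in>set (tl (gp c r)). Qcell E q (d # gp c r) u) = Rv c"
    unfolding Rv_def
  proof (rule prod.cong[OF refl], rule Qcell_eqI)
    fix u e assume u: "u \<in> set (tl (gp c r))" and "e \<in> E" "u \<in> e"
    have "u \<noteq> c" using u cn by auto
    moreover have "u \<noteq> d" using u dist g by (metis distinct.simps(2) list.set_intros(2))
    moreover have "path_edges (d # gp c r) = {d, c} # path_edges (gp c r)"
      using g by (metis pe_Cons2)
    ultimately show "e \<in> set (path_edges (d # gp c r)) \<longleftrightarrow> e \<in> set (path_edges (gp c r))"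
      using \<open>u \<in> e\<close> by auto
  qed
  finally show ?thesis .
qed

lemma Qcell_own: assumes "c \<in> C" "c \<noteq> r"
  shows "Qcell E q (gp c r) c = prod (\<lambda>e. q e c) ((\<lambda>d. {c,d}) ` ch c)"
proof -
  have "{\<epsilon>\<in>E. c \<in> \<epsilon> \<and> \<epsilon> \<notin> set (path_edges (gp c r))} = {e\<in>E. c \<in> e} - {{c, par c}}"
  proof -
    have "{c, par c} \<in> set (path_edges (gp c r))"
      using par_props[OF assms] by (metis list.set_intros(1) pe_Cons_nonempty gp_ne gp_hd rC)
    then show ?thesis using pe_at_c[OF assms] by blast
  qed
  also have "\<dots> = (\<lambda>d. {c,d}) ` ch c" using edges_at[OF assms] by auto
  finally show ?thesis unfolding Qcell_def by simp
qed

lemma Qcell_child: assumes "c \<in> C" "c \<noteq> r" "d \<in> ch c"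
  shows "Qcell E q (d # gp c r) c = prod (\<lambda>e. q e c) ((\<lambda>d. {c,d}) ` ch c - {{c,d}})"
proof -
  have g: "gp c r = c # tl (gp c r)" using gp_Cons assms rC by blast
  have pe: "path_edges (d # gp c r) = {d, c} # path_edges (gp c r)"
    using g by (metis pe_Cons2)
  have "{\<epsilon>\<in>E. c \<in> \<epsilon> \<and> \<epsilon> \<notin> set (path_edges (d # gp c r))} =
        {\<epsilon>\<in>E. c \<in> \<epsilon> \<and> \<epsilon> \<notin> set (path_edges (gp c r))} - {{c,d}}"
    unfolding pe by (auto simp: insert_commute)
  also have "{\<epsilon>\<in>E. c \<in> \<epsilon> \<and> \<epsilon> \<notin> set (path_edges (gp c r))} = (\<lambda>d. {c,d}) ` ch c"
  proof -
    have "{c, par c} \<in> set (path_edges (gp c r))"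
      using par_props[OF assms(1,2)] by (metis list.set_intros(1) pe_Cons_nonempty gp_ne gp_hd rC)
    then have "{\<epsilon>\<in>E. c \<in> \<epsilon> \<and> \<epsilon> \<notin> set (path_edges (gp c r))} = {e\<in>E. c \<in> e} - {{c, par c}}"
      using pe_at_c[OF assms(1,2)] by blast
    also have "\<dots> = (\<lambda>d. {c,d}) ` ch c" using edges_at[OF assms(1,2)] by auto
    finally show ?thesis .
  qed
  finally show ?thesis unfolding Qcell_def by simp
qed

lemma off_child: assumes "c \<in> C" "c \<notin> set mp" "d \<in> ch c" shows "d \<notin> set mp"
proof
  assume "d \<in> set mp"
  then obtain xs ys where s: "mp = xs @ d # ys" using split_list by metis
  have "gp d r = d # ys" using gp_split(1)[OF v0C rC] s unfolding mp_def by blast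
  then have "ys = gp c r" using ch_gp assms by simp
  then have "c \<in> set mp" using s c_in_gp[OF assms(1) rC] by auto
  then show False using assms by simp
qed

lemma desc_less: assumes "c \<in> C" "d \<in> ch c" shows "card (desc d) < card (desc c)"
  using ch_desc_sub[OF assms] ch_not_desc[OF assms] c_in_desc[OF assms(1)] finite_desc
  by (metis psubsetI psubset_card_mono)

lemma par_in_gp_v0: assumes "c \<in> C" "c \<notin> set mp" shows "par c \<in> set (gp c v0)"
proof -
  have cr: "c \<noteq> r" using assms r_mp by auto
  have "gp c v0 = butlast (gp c v0) @ [v0]"
    using append_butlast_last_id[OF gp_ne[OF assms(1) v0C]] gp_last[OF assms(1) v0C] by simp
  then obtain xs where xs: "gp c v0 = xs @ [v0]" by blast
  have m: "mp = v0 # tl mp" using gp_Cons[OF v0C rC] unfolding mp_def .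
  define W where "W = xs @ v0 # tl mp"
  have "walk C E (xs @ [v0])" using gp_path[OF assms(1) v0C] xs unfolding is_path_walk by simp
  moreover have "walk C E mp" using gp_path[OF v0C rC] unfolding is_path_walk mp_def by blast
  then have "walk C E (v0 # tl mp)" by (simp only: m[symmetric])
  ultimately have w: "walk C E W" unfolding W_def using walk_append[of C E xs v0 "tl mp"] by simp
  have "hd W = c" unfolding W_def using gp_hd[OF assms(1) v0C] xs by (cases xs) auto
  moreover have "last W = r"
  proof -
    have "last W = last (v0 # tl mp)" unfolding W_def by simp
    also have "\<dots> = last mp" by (simp only: m[symmetric])
    finally show ?thesis using gp_last[OF v0C rC] unfolding mp_def by simp
  qed
  ultimately have sub: "set (gp c r) \<subseteq> set W" using walk_gp_subset[OF w] by simp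
  have pC: "par c \<in> C" using par_props[OF assms(1) cr] by blast
  have "par c \<in> set (gp c r)" using par_props(1)[OF assms(1) cr] c_in_gp[OF pC rC] by simp
  moreover have "set (tl mp) \<subseteq> set mp" by (cases mp) auto
  ultimately have "par c \<in> set xs \<or> par c \<in> set mp" using sub v0_mp unfolding W_def by auto
  then show ?thesis
  proof
    assume "par c \<in> set xs" then show ?thesis using xs by simp
  next
    assume pm: "par c \<in> set mp"
    obtain as bs where s: "mp = as @ par c # bs" using split_list pm by metis
    have "gp v0 (par c) = as @ [par c]" using gp_split(2)[OF v0C rC] s unfolding mp_def by blast
    then have sm: "set (gp (par c) v0) \<subseteq> set mp" using gp_rev[OF v0C pC] s by auto
    have wp: "walk C E (gp (par c) v0)" using gp_path[OF pC v0C] unfolding is_path_walk by blast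
    have gpc: "gp (par c) v0 = par c # tl (gp (par c) v0)" using gp_Cons[OF pC v0C] .
    have "{c, par c} \<in> E" using par_props[OF assms(1) cr] by blast
    moreover have "walk C E (par c # tl (gp (par c) v0))" using wp gpc by simp
    ultimately have "walk C E (c # par c # tl (gp (par c) v0))"
      using walk_Cons2[of C E c "par c" "tl (gp (par c) v0)"] assms(1) by blast
    then have "walk C E (c # gp (par c) v0)" by (simp only: gpc[symmetric])
    moreover have "distinct (c # gp (par c) v0)" using sm assms(2) gp_distinct[OF pC v0C] by auto
    ultimately have ip: "is_path C E (c # gp (par c) v0)" using walk_distinct_path by blast
    have "last (c # gp (par c) v0) = v0" using gp_last[OF pC v0C] gp_ne[OF pC v0C] by simp
    then have "gp c v0 = c # gp (par c) v0" using gp_eq[OF ip] by simp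
    then show ?thesis using c_in_gp[OF pC v0C] by simp
  qed
qed

lemma atmost1: assumes "c \<in> C" "c \<notin> set mp" "e \<in> (\<lambda>d. {c,d}) ` ch c" "e' \<in> (\<lambda>d. {c,d}) ` ch c"
  "q e c \<noteq> 1" "q e' c \<noteq> 1" shows "e = e'"
proof (cases "c \<in> A")
  case True
  have cr: "c \<noteq> r" using assms r_mp by auto
  have "ch c = {}" using valency_ch[OF assms(1) cr] arr_val[OF True] finite_ch by simp
  then show ?thesis using assms by simp
next
  case False
  then have cV: "c \<in> V - {v0}" using assms(1,2) CVA v0_mp by auto
  have cv0: "c \<noteq> v0" using cV by simp
  have pin: "par c \<in> set (gp c v0)" using par_in_gp_v0 assms by blast
  have cr: "c \<noteq> r" using assms r_mp by auto
  have ipc: "is_path C E (gp c v0)" using gp_path[OF assms(1) v0C] by blast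
  have e1: "{c, par c} \<in> set (path_edges (gp c v0))"
    using chord2[OF ipc c_in_gp[OF assms(1) v0C] pin] par_props(3,4)[OF assms(1) cr] by auto
  have ex: "{c, par c} = {c, hd (tl (gp c v0))}" using edge_at_start[OF assms(1) v0C cv0 e1] by simp
  have notin: "x \<notin> set (path_edges (gp v0 c))" if xS: "x \<in> (\<lambda>d. {c,d}) ` ch c" for x
  proof
    assume xin: "x \<in> set (path_edges (gp v0 c))"
    obtain d where d: "d \<in> ch c" "x = {c,d}" using xS by blast
    have "set (path_edges (gp v0 c)) = set (path_edges (gp c v0))"
      unfolding gp_rev[OF assms(1) v0C] pe_rev by simp
    then have "{c,d} \<in> set (path_edges (gp c v0))" using xin d by simp
    then have "{c,d} = {c, par c}" using edge_at_start[OF assms(1) v0C cv0] ex by simp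
    then have "d = par c" by (auto simp: doubleton_eq_iff)
    then show False using d unfolding ch_def by simp
  qed
  let ?T = "{e\<in>E. c \<in> e \<and> e \<notin> set (path_edges (gp v0 c)) \<and> q e c \<noteq> 1}"
  have sub: "(\<lambda>d. {c,d}) ` ch c \<subseteq> {e\<in>E. c \<in> e}" using edges_at(1)[OF assms(1) cr] by blast
  have "e \<in> ?T" using assms(3,5) notin[OF assms(3)] sub by blast
  moreover have "e' \<in> ?T" using assms(4,6) notin[OF assms(4)] sub by blast
  moreover have "card ?T \<le> Suc 0" using pr[OF cV] by simp
  moreover have "finite ?T" using finE by simp
  ultimately show ?thesis using card_le_Suc0_iff_eq by blast
qed

lemma off_path_sum: assumes "c \<in> C" "c \<notin> set mp"
  shows "(\<Sum>w\<in>desc c. Xv w * (valency E w - 2)) = - Rv c"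
  using assms
proof (induction "card (desc c)" arbitrary: c rule: less_induct)
  case less
  have cr: "c \<noteq> r" using less.prems r_mp by auto
  let ?S = "(\<lambda>d. {c,d}) ` ch c"
  let ?g = "\<lambda>e. q e c"
  have IH: "(\<Sum>w\<in>desc d. Xv w * (valency E w - 2)) = - Rv d" if "d \<in> ch c" for d
    using less.hyps[OF desc_less[OF less.prems(1) that]] that ch_sub off_child less.prems by blast
  have inj: "inj_on (\<lambda>d. {c,d}) (ch c)" using edges_at(3)[OF less.prems(1) cr] .
  have cardS: "card ?S = card (ch c)" using card_image[OF inj] .
  have "(\<Sum>w\<in>desc c. Xv w * (valency E w - 2)) =
        Xv c * (valency E c - 2) + (\<Sum>d\<in>ch c. \<Sum>w\<in>desc d. Xv w * (valency E w - 2))"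
    using desc_sum[OF less.prems(1) cr] .
  also have "\<dots> = Xv c * (valency E c - 2) + (\<Sum>d\<in>ch c. - Rv d)" using IH by simp
  also have "\<dots> = Rv c * ((int (card ?S) - 1) * prod ?g ?S - (\<Sum>e\<in>?S. prod ?g (?S - {e})))"
  proof -
    have "Xv c = prod ?g ?S * Rv c" using X_split[OF less.prems(1)] Qcell_own[OF less.prems(1) cr] by simp
    moreover have "valency E c = int (card ?S) + 1" using valency_ch[OF less.prems(1) cr] cardS by simp
    moreover have "(\<Sum>d\<in>ch c. - Rv d) = - (\<Sum>d\<in>ch c. prod ?g (?S - {{c,d}})) * Rv c"
      using R_child[OF less.prems(1)] Qcell_child[OF less.prems(1) cr]
      by (simp add: sum_negf sum_distrib_right)
    moreover have "(\<Sum>d\<in>ch c. prod ?g (?S - {{c,d}})) = (\<Sum>e\<in>?S. prod ?g (?S - {e}))"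
      using sum.reindex[OF inj, of "\<lambda>e. prod ?g (?S - {e})"] by simp
    ultimately show ?thesis by (simp add: algebra_simps)
  qed
  also have "\<dots> = - Rv c"
    using alg[of ?S ?g] finite_ch atmost1[OF less.prems] by simp
  finally show ?case .
qed

end



context setting begin

definition nn where "nn = length mp - 1"
definition OC where "OC y = {c\<in>C. {y,c} \<in> E \<and> c \<notin> set mp}"
definition Off where "Off y = {e\<in>E. y \<in> e \<and> e \<notin> set (path_edges mp)}"
definition Bv where "Bv y = (\<Prod>e\<in>Off y. q e y)"
definition PEa where "PEa y = {e\<in>set (path_edges mp). y \<in> e}"
definition PEd where "PEd y = {e\<in>set (path_edges mp). y \<in> e \<and> e \<notin> set (path_edges (gp y r))}"
definition pp where "pp y = (\<Prod>e\<in>PEd y. q e y)"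
definition hh where "hh w = Xv w * (valency E w - 2)"
definition Phi where "Phi i = hh (mp ! i) - (\<Sum>c\<in>OC (mp ! i). Rv c)"

lemma v0r: "v0 \<noteq> r" using v0V rA VA by auto

lemma mp_path: "is_path C E mp" using gp_path[OF v0C rC] unfolding mp_def by blast
lemma mp_distinct: "distinct mp" using gp_distinct[OF v0C rC] unfolding mp_def .
lemma mp_set: "set mp \<subseteq> C" using gp_set[OF v0C rC] unfolding mp_def .
lemma mp_hd: "mp ! 0 = v0" using gp_hd[OF v0C rC] gp_ne[OF v0C rC] unfolding mp_def by (simp add: hd_conv_nth)
lemma mp_last: "mp ! nn = r" using gp_last[OF v0C rC] gp_ne[OF v0C rC] unfolding mp_def nn_def by (simp add: last_conv_nth)
lemma mp_pe_E: "set (path_edges mp) \<subseteq> E" using mp_path unfolding is_path_def by blast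

lemma nn_pos: "nn \<ge> 1"
proof -
  have "length mp \<noteq> 1"
  proof
    assume "length mp = 1"
    then have "mp ! 0 = mp ! nn" unfolding nn_def by simp
    then show False using mp_hd mp_last v0r by simp
  qed
  moreover have "mp \<noteq> []" using gp_ne[OF v0C rC] unfolding mp_def .
  ultimately show ?thesis unfolding nn_def by (cases mp) (auto simp: Suc_le_eq)
qed

lemma len_mp: "length mp = Suc nn" using nn_pos unfolding nn_def by simp

lemma mp_nth_C: "i \<le> nn \<Longrightarrow> mp ! i \<in> C" using mp_set len_mp by (metis less_Suc_eq_le nth_mem subsetD)

lemma mp_nth_ne_r: "i < nn \<Longrightarrow> mp ! i \<noteq> r"
  using mp_distinct mp_last len_mp by (metis less_Suc_eq nat_neq_iff nth_eq_iff_index_eq)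

lemma gp_mp: assumes "i \<le> nn" shows "gp (mp ! i) r = drop i mp"
proof -
  have "mp = take i mp @ mp ! i # drop (Suc i) mp" using assms len_mp by (simp add: id_take_nth_drop)
  then have "gp v0 r = take i mp @ mp ! i # drop (Suc i) mp" unfolding mp_def[symmetric] .
  then have "gp (mp ! i) r = mp ! i # drop (Suc i) mp" by (rule gp_split(1)[OF v0C rC])
  then show ?thesis using assms len_mp by (simp add: Cons_nth_drop_Suc)
qed

lemma gp_v0_mp: assumes "i \<le> nn" shows "gp v0 (mp ! i) = take (Suc i) mp"
proof -
  have "mp = take i mp @ mp ! i # drop (Suc i) mp" using assms len_mp by (simp add: id_take_nth_drop)
  then have "gp v0 r = take i mp @ mp ! i # drop (Suc i) mp" unfolding mp_def[symmetric] .
  then have "gp v0 (mp ! i) = take i mp @ [mp ! i]" by (rule gp_split(2)[OF v0C rC])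
  then show ?thesis using assms len_mp by (simp add: take_Suc_conv_app_nth)
qed

lemma par_mp: assumes "i < nn" shows "par (mp ! i) = mp ! Suc i"
  unfolding par_def gp_mp[OF less_imp_le[OF assms]] using assms len_mp
  by (simp add: tl_drop hd_drop_conv_nth nth_tl)

lemma mp_edge: assumes "Suc i \<le> nn" shows "{mp ! i, mp ! Suc i} \<in> E"
proof -
  have "{mp ! i, mp ! Suc i} \<in> set (path_edges mp)" unfolding in_pe_iff using assms len_mp by (intro exI[of _ i]) auto
  then show ?thesis using mp_pe_E by blast
qed

lemma ch_mp: assumes "i < nn"
  shows "ch (mp ! i) = OC (mp ! i) \<union> (if i = 0 then {} else {mp ! (i - 1)})"
proof -
  let ?y = "mp ! i"
  have yC: "?y \<in> C" using mp_nth_C assms by simp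
  show ?thesis
  proof (rule set_eqI)
    fix d
    show "d \<in> ch ?y \<longleftrightarrow> d \<in> OC ?y \<union> (if i = 0 then {} else {mp ! (i - 1)})"
    proof
      assume d: "d \<in> ch ?y"
      then have dC: "d \<in> C" and e: "{?y, d} \<in> E" and dp: "d \<noteq> mp ! Suc i"
        unfolding ch_def using par_mp[OF assms] by auto
      have dy: "d \<noteq> ?y" using edge_card[OF e] by (cases "d = ?y") auto
      show "d \<in> OC ?y \<union> (if i = 0 then {} else {mp ! (i - 1)})"
      proof (cases "d \<in> set mp")
        case False then show ?thesis using dC e unfolding OC_def by auto
      next
        case True
        have "?y \<in> set mp" using assms len_mp by simp
        then have "{?y, d} \<in> set (path_edges mp)" using chord2[OF mp_path _ True e] dy by auto
        then obtain k where k: "Suc k < length mp" "{?y, d} = {mp ! k, mp ! Suc k}" using in_pe_iff by metis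
        have "d = mp ! (i - 1) \<and> i \<noteq> 0"
        proof -
          have inj: "\<And>a b. a < length mp \<Longrightarrow> b < length mp \<Longrightarrow> mp ! a = mp ! b \<Longrightarrow> a = b"
            using mp_distinct nth_eq_iff_index_eq by blast
          have il: "i < length mp" using assms len_mp by simp
          from k(2) have "(?y = mp ! k \<and> d = mp ! Suc k) \<or> (?y = mp ! Suc k \<and> d = mp ! k)"
            by (auto simp: doubleton_eq_iff)
          then show ?thesis
          proof
            assume h: "?y = mp ! k \<and> d = mp ! Suc k"
            then have "i = k" using inj il k(1) by simp
            then show ?thesis using h dp by simp
          next
            assume h: "?y = mp ! Suc k \<and> d = mp ! k"
            then have "i = Suc k" using inj il k(1) by simp
            then show ?thesis using h by simp
          qed
        qed
        then show ?thesis by simp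
      qed
    next
      assume d: "d \<in> OC ?y \<union> (if i = 0 then {} else {mp ! (i - 1)})"
      show "d \<in> ch ?y"
      proof (cases "d \<in> OC ?y")
        case True
        then have "d \<noteq> mp ! Suc i" using assms len_mp unfolding OC_def by auto
        then show ?thesis using True par_mp[OF assms] unfolding OC_def ch_def by auto
      next
        case False
        then have i0: "i \<noteq> 0" and dd: "d = mp ! (i - 1)" using d by (auto split: if_splits)
        have "Suc (i - 1) \<le> nn" using assms by simp
        from mp_edge[OF this] have "{mp ! (i - 1), mp ! i} \<in> E" using i0 by simp
        then have e: "{?y, d} \<in> E" using dd by (simp add: insert_commute)
        have "d \<noteq> mp ! Suc i" using mp_distinct dd i0 assms len_mp by (simp add: nth_eq_iff_index_eq)
        moreover have "d \<in> C" using dd mp_nth_C assms by simp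
        ultimately show ?thesis using e par_mp[OF assms] unfolding ch_def by auto
      qed
    qed
  qed
qed

lemma mp_V: assumes "i < nn" shows "mp ! i \<in> V"
proof (cases "i = 0")
  case True then show ?thesis using mp_hd v0V by simp
next
  case False
  let ?y = "mp ! i"
  have yC: "?y \<in> C" using mp_nth_C assms by simp
  have "mp ! (i - 1) \<in> ch ?y" using ch_mp[OF assms] False by simp
  then have "card (ch ?y) \<noteq> 0" using finite_ch by auto
  then have "valency E ?y \<noteq> 1" using valency_ch[OF yC mp_nth_ne_r[OF assms]] by simp
  then show ?thesis using yC CVA arr_val by auto
qed

lemma OC_ch: "i < nn \<Longrightarrow> c \<in> OC (mp ! i) \<Longrightarrow> c \<in> ch (mp ! i)"
  using ch_mp by auto

lemma OC_notin: "c \<in> OC y \<Longrightarrow> c \<notin> set mp \<and> c \<in> C" unfolding OC_def by auto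

lemma pe_gp_sub: assumes "i \<le> nn" shows "set (path_edges (gp (mp ! i) r)) \<subseteq> set (path_edges mp)"
  unfolding gp_mp[OF assms] pe_drop by (simp add: set_drop_subset)

lemma Qcell_main: assumes "i \<le> nn"
  shows "Qcell E q (gp (mp ! i) r) (mp ! i) = pp (mp ! i) * Bv (mp ! i)"
proof -
  let ?y = "mp ! i"
  have "{\<epsilon>\<in>E. ?y \<in> \<epsilon> \<and> \<epsilon> \<notin> set (path_edges (gp ?y r))} = PEd ?y \<union> Off ?y"
    unfolding PEd_def Off_def using mp_pe_E pe_gp_sub[OF assms] by auto
  moreover have "PEd ?y \<inter> Off ?y = {}" unfolding PEd_def Off_def by auto
  moreover have "finite (PEd ?y)" "finite (Off ?y)" unfolding PEd_def Off_def using finE by auto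
  ultimately show ?thesis unfolding Qcell_def pp_def Bv_def by (simp add: prod.union_disjoint)
qed

lemma Off_img: assumes "i < nn"
  shows "Off (mp ! i) = (\<lambda>c. {mp ! i, c}) ` OC (mp ! i)" and "inj_on (\<lambda>c. {mp ! i, c}) (OC (mp ! i))"
proof -
  let ?y = "mp ! i"
  have yin: "?y \<in> set mp" using assms len_mp by simp
  show "Off ?y = (\<lambda>c. {?y, c}) ` OC ?y"
  proof
    show "Off ?y \<subseteq> (\<lambda>c. {?y, c}) ` OC ?y"
    proof
      fix e assume e: "e \<in> Off ?y"
      then obtain c where c: "c \<noteq> ?y" "e = {?y, c}" using edge_other unfolding Off_def by blast
      have eE: "e \<in> E" using e unfolding Off_def by auto
      have cC: "c \<in> C" using edge_sub[OF eE] c by auto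
      have "c \<notin> set mp"
      proof
        assume "c \<in> set mp"
        then have "{?y, c} \<in> set (path_edges mp)" using chord2[OF mp_path yin] eE c by auto
        then show False using e c unfolding Off_def by auto
      qed
      then show "e \<in> (\<lambda>c. {?y, c}) ` OC ?y" using cC eE c unfolding OC_def by auto
    qed
    show "(\<lambda>c. {?y, c}) ` OC ?y \<subseteq> Off ?y"
    proof
      fix e assume "e \<in> (\<lambda>c. {?y, c}) ` OC ?y"
      then obtain c where c: "c \<in> OC ?y" "e = {?y, c}" by blast
      have "e \<notin> set (path_edges mp)" using pe_subset c unfolding OC_def by blast
      then show "e \<in> Off ?y" using c unfolding OC_def Off_def by auto
    qed
  qed
  show "inj_on (\<lambda>c. {?y, c}) (OC ?y)" unfolding inj_on_def by (auto simp: doubleton_eq_iff)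
qed

lemma finite_OC: "finite (OC y)" unfolding OC_def using finite_subset[OF _ finC] by auto
lemma finite_Off: "finite (Off y)" unfolding Off_def using finE by auto

lemma Qcell_OC: assumes "i < nn" "c \<in> OC (mp ! i)"
  shows "Qcell E q (c # gp (mp ! i) r) (mp ! i) = pp (mp ! i) * (\<Prod>e\<in>Off (mp ! i) - {{mp ! i, c}}. q e (mp ! i))"
proof -
  let ?y = "mp ! i"
  have g: "gp ?y r = ?y # tl (gp ?y r)" using gp_Cons mp_nth_C assms rC by simp
  have pe: "path_edges (c # gp ?y r) = {c, ?y} # path_edges (gp ?y r)"
    using g by (metis pe_Cons2)
  have cn: "{?y, c} \<notin> set (path_edges mp)" using pe_subset OC_notin[OF assms(2)] by blast
  have "{\<epsilon>\<in>E. ?y \<in> \<epsilon> \<and> \<epsilon> \<notin> set (path_edges (c # gp ?y r))} = PEd ?y \<union> (Off ?y - {{?y, c}})"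
    unfolding pe PEd_def Off_def using mp_pe_E pe_gp_sub[of i] assms cn by (auto simp: insert_commute)
  moreover have "PEd ?y \<inter> (Off ?y - {{?y, c}}) = {}" unfolding PEd_def Off_def by auto
  moreover have "finite (PEd ?y)" "finite (Off ?y - {{?y,c}})" unfolding PEd_def Off_def using finE by auto
  ultimately show ?thesis unfolding Qcell_def pp_def by (simp add: prod.union_disjoint)
qed

lemma valency_main: assumes "i \<le> nn" shows "valency E (mp ! i) = int (card (PEa (mp ! i))) + int (card (Off (mp ! i)))"
proof -
  let ?y = "mp ! i"
  have "{e\<in>E. ?y \<in> e} = PEa ?y \<union> Off ?y" unfolding PEa_def Off_def using mp_pe_E by auto
  moreover have "PEa ?y \<inter> Off ?y = {}" unfolding PEa_def Off_def by auto
  moreover have "finite (PEa ?y)" "finite (Off ?y)" unfolding PEa_def Off_def using finE by auto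
  ultimately show ?thesis unfolding valency_def by (simp add: card_Un_disjoint)
qed

lemma atmost1_main: assumes "i < nn" "e \<in> Off (mp ! i)" "e' \<in> Off (mp ! i)" "q e (mp ! i) \<noteq> 1" "q e' (mp ! i) \<noteq> 1"
  shows "e = e'"
proof (cases "i = 0")
  case True
  then show ?thesis using assms v0q mp_hd unfolding Off_def by auto
next
  case False
  let ?y = "mp ! i"
  have yV: "?y \<in> V - {v0}" using mp_V[OF assms(1)] nth_eq_iff_index_eq[OF mp_distinct, of i 0] mp_hd False assms(1) len_mp
    by auto
  have sub: "set (path_edges (gp v0 ?y)) \<subseteq> set (path_edges mp)"
    unfolding gp_v0_mp[OF less_imp_le[OF assms(1)]] pe_take by (simp add: set_take_subset)
  let ?T = "{e\<in>E. ?y \<in> e \<and> e \<notin> set (path_edges (gp v0 ?y)) \<and> q e ?y \<noteq> 1}"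
  have "e \<in> ?T" "e' \<in> ?T" using assms sub unfolding Off_def by auto
  moreover have "card ?T \<le> Suc 0" using pr[OF yV] by simp
  moreover have "finite ?T" using finE by simp
  ultimately show ?thesis using card_le_Suc0_iff_eq by blast
qed

lemma Phi_val: assumes "i < nn"
  shows "Phi i = pp (mp ! i) * Rv (mp ! i) * (Bv (mp ! i) * (int (card (PEa (mp ! i))) - 1) - 1)"
proof -
  let ?y = "mp ! i"
  let ?S = "Off ?y"
  let ?g = "\<lambda>e. q e ?y"
  have yC: "?y \<in> C" using mp_nth_C assms by simp
  have X: "Xv ?y = pp ?y * Bv ?y * Rv ?y" using X_split[OF yC] Qcell_main[of i] assms by simp
  have "(\<Sum>c\<in>OC ?y. Rv c) = (\<Sum>c\<in>OC ?y. pp ?y * prod ?g (?S - {{?y, c}}) * Rv ?y)"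
    using R_child[OF yC OC_ch[OF assms]] Qcell_OC[OF assms] by (intro sum.cong) auto
  also have "\<dots> = pp ?y * Rv ?y * (\<Sum>c\<in>OC ?y. prod ?g (?S - {{?y, c}}))"
    by (simp add: sum_distrib_left algebra_simps)
  also have "(\<Sum>c\<in>OC ?y. prod ?g (?S - {{?y, c}})) = (\<Sum>e\<in>?S. prod ?g (?S - {e}))"
    using sum.reindex[OF Off_img(2)[OF assms], of "\<lambda>e. prod ?g (?S - {e})"] Off_img(1)[OF assms] by simp
  also have "(\<Sum>e\<in>?S. prod ?g (?S - {e})) = (int (card ?S) - 1) * Bv ?y + 1"
    using alg[of ?S ?g] finite_Off atmost1_main[OF assms] unfolding Bv_def by fastforce
  finally have s: "(\<Sum>c\<in>OC ?y. Rv c) = pp ?y * Rv ?y * ((int (card ?S) - 1) * Bv ?y + 1)" .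
  show ?thesis unfolding Phi_def hh_def X s valency_main[OF less_imp_le[OF assms]]
    by (simp add: algebra_simps)
qed

end



context setting begin

lemma D_step: assumes "i < nn"
  shows "(\<Sum>w\<in>desc (mp ! i). hh w) = Phi i + (if i = 0 then 0 else (\<Sum>w\<in>desc (mp ! (i - 1)). hh w))"
proof -
  let ?y = "mp ! i"
  let ?D = "\<lambda>c. \<Sum>w\<in>desc c. hh w"
  have yC: "?y \<in> C" using mp_nth_C assms by simp
  have "?D ?y = hh ?y + (\<Sum>d\<in>ch ?y. ?D d)" using desc_sum[OF yC mp_nth_ne_r[OF assms]] .
  also have "(\<Sum>d\<in>ch ?y. ?D d) = (\<Sum>d\<in>OC ?y. ?D d) + (if i = 0 then 0 else ?D (mp ! (i - 1)))"
  proof -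
    have disj: "OC ?y \<inter> (if i = 0 then {} else {mp ! (i - 1)}) = {}"
      using assms len_mp unfolding OC_def by auto
    have "(\<Sum>d\<in>ch ?y. ?D d) = (\<Sum>d\<in>OC ?y. ?D d) + (\<Sum>d\<in>(if i = 0 then {} else {mp ! (i - 1)}). ?D d)"
      unfolding ch_mp[OF assms] by (rule sum.union_disjoint) (use finite_OC disj in auto)
    then show ?thesis by simp
  qed
  also have "(\<Sum>d\<in>OC ?y. ?D d) = (\<Sum>d\<in>OC ?y. - Rv d)"
    using off_path_sum OC_notin unfolding hh_def by (intro sum.cong) auto
  finally show ?thesis unfolding Phi_def by (simp add: sum_negf)
qed

lemma D_rec: "i < nn \<Longrightarrow> (\<Sum>w\<in>desc (mp ! i). hh w) = (\<Sum>j\<le>i. Phi j)"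
proof (induction i)
  case 0 then show ?case using D_step by simp
next
  case (Suc i)
  then show ?case using D_step[OF Suc.prems] by simp
qed

lemma desc_last: "desc (mp ! (nn - 1)) = C - {r}"
proof
  have ne: "mp ! (nn - 1) \<noteq> r" using mp_nth_ne_r nn_pos by simp
  have "r \<notin> desc (mp ! (nn - 1))" using ne gp_refl[OF rC] unfolding desc_def by simp
  then show "desc (mp ! (nn - 1)) \<subseteq> C - {r}" using desc_sub by blast
  show "C - {r} \<subseteq> desc (mp ! (nn - 1))"
  proof
    fix w assume w: "w \<in> C - {r}"
    then have wC: "w \<in> C" by simp
    have g: "gp r w = r # tl (gp r w)" using gp_Cons[OF rC wC] .
    have t: "tl (gp r w) \<noteq> []"
    proof
      assume "tl (gp r w) = []"
      then have "last (gp r w) = r" using g by (metis last_ConsL)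
      then show False using gp_last[OF rC wC] w by simp
    qed
    then obtain a rest where "tl (gp r w) = a # rest" by (cases "tl (gp r w)") auto
    then have g2: "gp r w = r # a # rest" using g by simp
    have e1: "{r, a} \<in> E" using gp_path[OF rC wC] unfolding g2 using path_Cons_edge by blast
    have "Suc (nn - 1) \<le> nn" using nn_pos by simp
    from mp_edge[OF this] have e2: "{r, mp ! (nn - 1)} \<in> E" using nn_pos mp_last by (simp add: insert_commute)
    have "card {e\<in>E. r \<in> e} = 1" using arr_val[OF rA] unfolding valency_def by simp
    then obtain e0 where e0: "{e\<in>E. r \<in> e} = {e0}" using card_1_singletonE by blast
    have "{r, a} \<in> {e\<in>E. r \<in> e}" "{r, mp ! (nn - 1)} \<in> {e\<in>E. r \<in> e}" using e1 e2 by simp_all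
    then have "{r, a} = e0" "{r, mp ! (nn - 1)} = e0" unfolding e0 by simp_all
    then have "{r, a} = {r, mp ! (nn - 1)}" by simp
    moreover have "a \<noteq> r" using gp_distinct[OF rC wC] g2 by auto
    ultimately have "a = mp ! (nn - 1)" by (auto simp: doubleton_eq_iff)
    then have "mp ! (nn - 1) \<in> set (gp r w)" unfolding g2 by simp
    then have "mp ! (nn - 1) \<in> set (gp w r)" using gp_rev[OF wC rC] by simp
    then show "w \<in> desc (mp ! (nn - 1))" using wC unfolding desc_def by simp
  qed
qed

lemma total_T: "(\<Sum>w\<in>C - {r}. hh w) = (\<Sum>j<nn. Phi j)"
proof -
  have "(\<Sum>w\<in>C - {r}. hh w) = (\<Sum>j\<le>nn - 1. Phi j)"
    using D_rec[of "nn - 1"] desc_last nn_pos by simp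
  moreover have "{..nn - 1} = {..<nn}" using nn_pos by (auto simp: lessThan_Suc_atMost[symmetric])
  ultimately show ?thesis by simp
qed

end



lemma inj_img: "inj_on (image (Inl::'a \<Rightarrow> 'a+'b)) X"
  by (simp add: inj_on_def inj_image_eq_iff)

lemma pe_map: "path_edges (map g xs) = map (image g) (path_edges xs)"
  by (induction xs rule: induct_list012) auto

context setting begin

definition PP where "PP = set mp - {r}"
definition NAV where "NAV = {v\<in>PP. Bv v \<noteq> 1}"
definition CT where "CT = Inl ` PP \<union> (Inl ` {r} \<union> Inr ` NAV)"
definition ET where "ET = (image Inl) ` set (path_edges mp) \<union> (\<lambda>v. {Inl v, Inr v}) ` NAV"

lemma CT_eq: "CT = Inl ` set mp \<union> Inr ` NAV"
  unfolding CT_def PP_def using r_mp by auto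

lemma gpC: "gpath (V \<union> A) E = gp" using CVA by simp

lemma sub_vertices_eq: "sub_vertices V A E v0 {r} = PP"
proof -
  have "set mp - {r} \<subseteq> V"
  proof
    fix y assume "y \<in> set mp - {r}"
    then obtain i where "i < length mp" "mp ! i = y" "y \<noteq> r" by (auto simp: in_set_conv_nth)
    then have "i < nn" using mp_last len_mp by (metis less_Suc_eq)
    then show "y \<in> V" using mp_V \<open>mp ! i = y\<close> by blast
  qed
  then show ?thesis unfolding sub_vertices_def PP_def gpC using rA VA by (auto simp: mp_def)
qed

lemma sub_edges_eq: "sub_edges V A E v0 {r} = set (path_edges mp)"
  unfolding sub_edges_def gpC using mp_pe_E by (auto simp: mp_def)

lemma bval_eq: "bval V A E q v0 {r} = Bv"
  unfolding bval_def[abs_def] sub_edges_eq Bv_def Off_def by (rule ext) (simp add: conj_commute)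

lemma nav_eq: "new_arrow_vertices V A E q v0 {r} = NAV"
  unfolding new_arrow_vertices_def sub_vertices_eq bval_eq NAV_def ..

lemma TX_V_eq: "TX_V V A E v0 {r} = Inl ` PP" unfolding TX_V_def sub_vertices_eq ..
lemma TX_A_eq: "TX_A V A E q v0 {r} = Inl ` {r} \<union> Inr ` NAV" unfolding TX_A_def nav_eq ..
lemma TX_E_eq: "TX_E V A E q v0 {r} = ET" unfolding TX_E_def nav_eq sub_edges_eq ET_def ..

lemma NAV_PP: "NAV \<subseteq> PP" unfolding NAV_def by auto

lemma ET_Inr: assumes "\<epsilon> \<in> ET" "Inr u \<in> \<epsilon>" shows "\<epsilon> = {Inl u, Inr u}" "u \<in> NAV"
  using assms unfolding ET_def by auto

lemma gy_sub: assumes "y \<in> set mp" shows "set (gp y r) \<subseteq> set mp" and "set (path_edges (gp y r)) \<subseteq> set (path_edges mp)"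
proof -
  obtain i where i: "i < length mp" "y = mp ! i" using assms by (auto simp: in_set_conv_nth)
  then have il: "i \<le> nn" using len_mp by simp
  show "set (gp y r) \<subseteq> set mp" using gp_mp[OF il] i by (simp add: set_drop_subset)
  show "set (path_edges (gp y r)) \<subseteq> set (path_edges mp)" using pe_gp_sub[OF il] i by simp
qed

lemma path_Inl: assumes "y \<in> set mp" shows "is_path CT ET (map Inl (gp y r))"
proof -
  have yC: "y \<in> C" using assms mp_set by auto
  have "gp y r \<noteq> []" using gp_ne[OF yC rC] .
  moreover have "set (map Inl (gp y r)) \<subseteq> CT" using gy_sub(1)[OF assms] unfolding CT_eq by auto
  moreover have "set (path_edges (map Inl (gp y r))) \<subseteq> ET"
    using gy_sub(2)[OF assms] unfolding pe_map ET_def by auto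
  moreover have "distinct (path_edges (map Inl (gp y r)))"
  proof -
    have "distinct (path_edges (gp y r))" using gp_path[OF yC rC] unfolding is_path_def by blast
    then show ?thesis unfolding pe_map by (simp add: distinct_map inj_img)
  qed
  ultimately show ?thesis unfolding is_path_def by simp
qed

lemma path_all_Inl: assumes "is_path CT ET p" "\<exists>a. hd p = Inl a" "\<exists>b. last p = Inl b"
  shows "\<forall>x\<in>set p. \<exists>a. x = Inl a"
proof (rule ccontr)
  assume "\<not> (\<forall>x\<in>set p. \<exists>a. x = Inl a)"
  then obtain x where x: "x \<in> set p" "\<nexists>a. x = Inl a" by blast
  have "\<exists>u. x = Inr u" using x(2) by (cases x) auto
  then obtain u where xu: "x = Inr u" by blast
  obtain xs ys where s: "p = xs @ Inr u # ys" using split_list x xu by metis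
  have "xs \<noteq> []" using s assms(2) by (cases xs) auto
  then obtain xs' a where xs: "xs = xs' @ [a]" by (metis rev_exhaust)
  have "ys \<noteq> []" using s assms(3) by (cases ys) auto
  then obtain b ys' where ys: "ys = b # ys'" by (cases ys) auto
  have pe: "path_edges p = path_edges (xs' @ [a]) @ {a, Inr u} # {Inr u, b} # path_edges (b # ys')"
  proof -
    have "p = xs' @ a # (Inr u # b # ys')" using s xs ys by simp
    then have "path_edges p = path_edges (xs' @ [a]) @ path_edges (a # Inr u # b # ys')" using pe_append by metis
    then show ?thesis by simp
  qed
  have "{a, Inr u} \<in> ET" "{Inr u, b} \<in> ET" using assms(1) pe unfolding is_path_def by auto
  then have "{a, Inr u} = {Inl u, Inr u}" "{Inr u, b} = {Inl u, Inr u}"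
    using ET_Inr(1)[of "{a, Inr u}" u] ET_Inr(1)[of "{Inr u, b}" u] by auto
  then have "{a, Inr u} = {Inr u, b}" by simp
  moreover have "distinct (path_edges p)" using assms(1) unfolding is_path_def by blast
  ultimately show False using pe by simp
qed

lemma Inl_path_unique: assumes "y \<in> set mp" "is_path CT ET p" "hd p = Inl y" "last p = Inl r"
  shows "p = map Inl (gp y r)"
proof -
  have allInl: "\<forall>x\<in>set p. \<exists>a. x = Inl a" using path_all_Inl assms by blast
  define p0 where "p0 = map projl p"
  have pm: "p = map Inl p0" unfolding p0_def using allInl by (induction p) auto
  have ne: "p0 \<noteq> []" using assms(2) pm unfolding is_path_def by auto
  have s0: "set p0 \<subseteq> C"
  proof
    fix a assume "a \<in> set p0"
    then have "Inl a \<in> CT" using assms(2) pm unfolding is_path_def by auto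
    then show "a \<in> C" unfolding CT_eq using mp_set by auto
  qed
  have pep: "path_edges p = map (image Inl) (path_edges p0)" using pm pe_map by simp
  have pET: "set (path_edges p) \<subseteq> ET" and pd: "distinct (path_edges p)" using assms(2) unfolding is_path_def by blast+
  have ee: "e \<in> set (path_edges mp)" if "e \<in> set (path_edges p0)" for e
  proof -
    have "Inl ` e \<in> set (path_edges p)" unfolding pep using that by simp
    then have "Inl ` e \<in> ET" using pET by blast
    moreover have "Inl ` e \<notin> (\<lambda>v. {Inl v, Inr v :: 'a + 'a}) ` NAV"
    proof
      assume "Inl ` e \<in> (\<lambda>v. {Inl v, Inr v :: 'a + 'a}) ` NAV"
      then obtain v where "Inl ` e = {Inl v, Inr v :: 'a + 'a}" by blast
      then have "Inr v \<in> Inl ` e" by simp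
      then show False by auto
    qed
    ultimately have "Inl ` e \<in> (image (Inl :: 'a \<Rightarrow> 'a + 'a)) ` set (path_edges mp)" unfolding ET_def by (simp only: Un_iff) blast
    then obtain e' where e': "e' \<in> set (path_edges mp)" "(Inl :: 'a \<Rightarrow> 'a + 'a) ` e = Inl ` e'" by blast
    have "inj (Inl :: 'a \<Rightarrow> 'a + 'a)" by (simp add: inj_def)
    then have "e = e'" using inj_image_eq_iff[of Inl e e'] e'(2) by blast
    then show ?thesis using e' by simp
  qed
  have "distinct (path_edges p0)"
  proof -
    have "distinct (map (image (Inl :: 'a \<Rightarrow> 'a + 'a)) (path_edges p0))" using pd unfolding pep .
    then show ?thesis by (simp add: distinct_map)
  qed
  moreover have "set (path_edges p0) \<subseteq> E" using ee mp_pe_E by blast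
  ultimately have ip: "is_path C E p0" using ne s0 unfolding is_path_def by simp
  have "hd p0 = y" using assms(3) pm ne by (cases p0) auto
  moreover have "last p0 = r" using assms(4) pm ne by (simp add: last_map)
  ultimately have "gp y r = p0" using gp_eq[OF ip] by simp
  then show ?thesis using pm by simp
qed

lemma gpT_Inl: assumes "y \<in> set mp" shows "gpath CT ET (Inl y) (Inl r) = map Inl (gp y r)"
proof -
  have yC: "y \<in> C" using assms mp_set by auto
  have h: "hd (map Inl (gp y r)) = Inl y" using gp_hd[OF yC rC] gp_ne[OF yC rC] by (simp add: hd_map)
  have l: "last (map Inl (gp y r)) = Inl r" using gp_last[OF yC rC] gp_ne[OF yC rC] by (simp add: last_map)
  show ?thesis unfolding gpath_def[of CT ET]
  proof (rule the_equality)
    show "is_path CT ET (map Inl (gp y r)) \<and> hd (map Inl (gp y r)) = Inl y \<and> last (map Inl (gp y r)) = Inl r"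
      using path_Inl[OF assms] h l by simp
  qed (use Inl_path_unique[OF assms] in blast)
qed

lemma path_Inr: assumes "y \<in> NAV" shows "is_path CT ET (Inr y # map Inl (gp y r))"
proof -
  have ym: "y \<in> set mp" using assms NAV_PP unfolding PP_def by auto
  have yC: "y \<in> C" using ym mp_set by auto
  have ip: "is_path CT ET (map Inl (gp y r))" using path_Inl[OF ym] .
  have g: "map Inl (gp y r) = Inl y # tl (map Inl (gp y r))"
    using gp_hd[OF yC rC] gp_ne[OF yC rC] by (cases "gp y r") auto
  have pe: "path_edges (Inr y # map Inl (gp y r)) = {Inr y, Inl y} # path_edges (map Inl (gp y r))"
    using g by (metis pe_Cons2)
  have "{Inr y, Inl y} \<in> ET" using assms unfolding ET_def by (auto simp: insert_commute)
  moreover have "{Inr y, Inl y} \<notin> set (path_edges (map Inl (gp y r)))" unfolding pe_map by auto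
  moreover have "Inr y \<in> CT" using assms unfolding CT_eq by auto
  ultimately show ?thesis using ip unfolding is_path_def pe by auto
qed

lemma gpT_Inr: assumes "y \<in> NAV" shows "gpath CT ET (Inr y) (Inl r) = Inr y # map Inl (gp y r)"
proof -
  have ym: "y \<in> set mp" using assms NAV_PP unfolding PP_def by auto
  have yC: "y \<in> C" using ym mp_set by auto
  have l: "last (Inr y # map Inl (gp y r)) = Inl r" using gp_last[OF yC rC] gp_ne[OF yC rC] by (simp add: last_map)
  have uniq: "p = Inr y # map Inl (gp y r)" if p: "is_path CT ET p" "hd p = Inr y" "last p = Inl r" for p
  proof -
    obtain p' where pp': "p = Inr y # p'" using p(2) is_path_def p(1) by (cases p) auto
    have ne: "p' \<noteq> []" using p(3) pp' by auto
    then obtain b p'' where bp: "p' = b # p''" by (cases p') auto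
    have "is_path CT ET ([Inr y] @ b # p'')" using p(1) pp' bp by simp
    then have ip': "is_path CT ET p'" using path_append[of CT ET "[Inr y]" b p''] bp by simp
    have "{Inr y, b} \<in> ET" using p(1) pp' bp unfolding is_path_def by auto
    then have "{Inr y, b} = {Inl y, Inr y}" using ET_Inr by blast
    then have "b = Inl y" by (auto simp: doubleton_eq_iff)
    then have "p' = map Inl (gp y r)" using Inl_path_unique[OF ym ip'] bp p(3) pp' by simp
    then show ?thesis using pp' by simp
  qed
  show ?thesis unfolding gpath_def[of CT ET]
  proof (rule the_equality)
    show "is_path CT ET (Inr y # map Inl (gp y r)) \<and> hd (Inr y # map Inl (gp y r)) = Inr y \<and> last (Inr y # map Inl (gp y r)) = Inl r"
      using path_Inr[OF assms] l by simp
  qed (use uniq in blast)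
qed

end



context setting begin

definition qT where "qT = TX_q V A E q v0 {r}"

lemma qT_Inl: "qT e (Inl u) = (if Inr u \<in> e then Bv u else q (Inl -` e) u)"
  unfolding qT_def TX_q_def bval_eq by simp
lemma qT_Inr: "qT e (Inr u) = 1"
  unfolding qT_def TX_q_def by simp

lemma Off_r: "Off r = {}"
proof -
  have "card {e\<in>E. r \<in> e} = 1" using arr_val[OF rA] unfolding valency_def by simp
  then obtain e0 where e0: "{e\<in>E. r \<in> e} = {e0}" using card_1_singletonE by blast
  have "Suc (nn - 1) \<le> nn" using nn_pos by simp
  then have "{mp ! (nn - 1), mp ! Suc (nn - 1)} \<in> set (path_edges mp)"
    unfolding in_pe_iff using len_mp by (intro exI[of _ "nn - 1"]) auto
  then have m: "{mp ! (nn - 1), r} \<in> set (path_edges mp)" using nn_pos mp_last by simp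
  then have "{mp ! (nn - 1), r} \<in> {e\<in>E. r \<in> e}" using mp_pe_E by auto
  then have ee: "e0 = {mp ! (nn - 1), r}" using e0 by simp
  have "e \<in> set (path_edges mp)" if "e \<in> E" "r \<in> e" for e
  proof -
    have "e \<in> {e\<in>E. r \<in> e}" using that by simp
    then have "e = e0" unfolding e0 by simp
    then show ?thesis using ee m by simp
  qed
  then show ?thesis unfolding Off_def by blast
qed

lemma Bv_nav: assumes "u \<in> set mp" shows "(if u \<in> NAV then Bv u else 1) = Bv u"
proof (cases "u \<in> NAV")
  case False
  show ?thesis
  proof (cases "u = r")
    case True then show ?thesis using Off_r unfolding Bv_def by simp
  next
    case False
    then have "u \<in> PP" using assms unfolding PP_def by simp
    then show ?thesis using \<open>u \<notin> NAV\<close> unfolding NAV_def by simp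
  qed
qed simp

lemma QT_general:
  fixes \<gamma>' :: "('a + 'a) list" and Z :: "('a + 'a) set set"
  assumes ym: "y \<in> set mp" and um: "u \<in> set mp"
    and Zs: "Z \<subseteq> (\<lambda>v. {Inl v, Inr v}) ` NAV"
    and pe: "set (path_edges \<gamma>') = (image Inl) ` set (path_edges (gp y r)) \<union> Z"
  shows "Qcell ET qT \<gamma>' (Inl u) =
    (\<Prod>e\<in>{e\<in>set (path_edges mp). u \<in> e \<and> e \<notin> set (path_edges (gp y r))}. q e u) *
    (if u \<in> NAV \<and> {Inl u, Inr u} \<notin> Z then Bv u else 1)"
proof -
  let ?Pu = "{e\<in>set (path_edges mp). u \<in> e \<and> e \<notin> set (path_edges (gp y r))}"
  let ?Nu = "if u \<in> NAV \<and> {Inl u, Inr u} \<notin> Z then {{Inl u, Inr u :: 'a + 'a}} else {}"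
  have inj: "inj (Inl :: 'a \<Rightarrow> 'a + 'a)" by (simp add: inj_def)
  have S: "{\<epsilon>\<in>ET. Inl u \<in> \<epsilon> \<and> \<epsilon> \<notin> set (path_edges \<gamma>')} = (image Inl) ` ?Pu \<union> ?Nu"
  proof (rule set_eqI)
    fix \<epsilon> :: "('a + 'a) set"
    show "\<epsilon> \<in> {\<epsilon>\<in>ET. Inl u \<in> \<epsilon> \<and> \<epsilon> \<notin> set (path_edges \<gamma>')} \<longleftrightarrow> \<epsilon> \<in> (image Inl) ` ?Pu \<union> ?Nu"
    proof
      assume a: "\<epsilon> \<in> {\<epsilon>\<in>ET. Inl u \<in> \<epsilon> \<and> \<epsilon> \<notin> set (path_edges \<gamma>')}"
      then have "\<epsilon> \<in> ET" "Inl u \<in> \<epsilon>" "\<epsilon> \<notin> set (path_edges \<gamma>')" by auto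
      then consider (L) e where "e \<in> set (path_edges mp)" "\<epsilon> = Inl ` e" | (R) v where "v \<in> NAV" "\<epsilon> = {Inl v, Inr v}"
        unfolding ET_def by blast
      then show "\<epsilon> \<in> (image Inl) ` ?Pu \<union> ?Nu"
      proof cases
        case L
        have "u \<in> e" using L \<open>Inl u \<in> \<epsilon>\<close> by auto
        moreover have "e \<notin> set (path_edges (gp y r))" using L \<open>\<epsilon> \<notin> set (path_edges \<gamma>')\<close> pe by auto
        ultimately show ?thesis using L by auto
      next
        case R
        then have "v = u" using \<open>Inl u \<in> \<epsilon>\<close> by auto
        moreover have "\<epsilon> \<notin> Z" using \<open>\<epsilon> \<notin> set (path_edges \<gamma>')\<close> pe by auto
        ultimately show ?thesis using R by auto
      qed
    next
      assume a: "\<epsilon> \<in> (image Inl) ` ?Pu \<union> ?Nu"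
      then show "\<epsilon> \<in> {\<epsilon>\<in>ET. Inl u \<in> \<epsilon> \<and> \<epsilon> \<notin> set (path_edges \<gamma>')}"
      proof
        assume "\<epsilon> \<in> (image Inl) ` ?Pu"
        then obtain e where e: "e \<in> ?Pu" "\<epsilon> = Inl ` e" by blast
        have "\<epsilon> \<in> ET" using e unfolding ET_def by auto
        moreover have "\<epsilon> \<notin> (image Inl) ` set (path_edges (gp y r))"
          using e inj_image_eq_iff[OF inj] by auto
        moreover have "\<epsilon> \<notin> Z" using Zs e by auto
        ultimately show ?thesis using e pe by auto
      next
        assume "\<epsilon> \<in> ?Nu"
        then have "\<epsilon> = {Inl u, Inr u}" "u \<in> NAV" "\<epsilon> \<notin> Z" by (auto split: if_splits)
        moreover have "\<epsilon> \<notin> (image Inl) ` set (path_edges (gp y r))" using \<open>\<epsilon> = {Inl u, Inr u}\<close> by auto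
        ultimately show ?thesis unfolding ET_def using pe by auto
      qed
    qed
  qed
  have disj: "(image Inl) ` ?Pu \<inter> ?Nu = {}" by auto
  have fin: "finite ((image Inl) ` ?Pu)" "finite ?Nu" by auto
  have "Qcell ET qT \<gamma>' (Inl u) = (\<Prod>\<epsilon>\<in>(image Inl) ` ?Pu. qT \<epsilon> (Inl u)) * (\<Prod>\<epsilon>\<in>?Nu. qT \<epsilon> (Inl u))"
    unfolding Qcell_def S by (rule prod.union_disjoint[OF fin disj])
  also have "(\<Prod>\<epsilon>\<in>(image Inl) ` ?Pu. qT \<epsilon> (Inl u)) = (\<Prod>e\<in>?Pu. qT (Inl ` e) (Inl u))"
    using prod.reindex[OF inj_img] by simp
  also have "\<dots> = (\<Prod>e\<in>?Pu. q e u)"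
  proof (rule prod.cong[OF refl])
    fix e assume "e \<in> ?Pu"
    have "Inr u \<notin> (Inl ` e :: ('a + 'a) set)" by auto
    moreover have "Inl -` (Inl ` e :: ('a + 'a) set) = e" using inj by (simp add: inj_vimage_image_eq)
    ultimately show "qT (Inl ` e) (Inl u) = q e u" using qT_Inl by simp
  qed
  also have "(\<Prod>\<epsilon>\<in>?Nu. qT \<epsilon> (Inl u)) = (if u \<in> NAV \<and> {Inl u, Inr u} \<notin> Z then Bv u else 1)"
    using qT_Inl by simp
  finally show ?thesis .
qed

lemma Qcell_T_split: assumes "y \<in> set mp" "u \<in> set mp"
  shows "Qcell E q (gp y r) u =
    (\<Prod>e\<in>{e\<in>set (path_edges mp). u \<in> e \<and> e \<notin> set (path_edges (gp y r))}. q e u) * Bv u"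
proof -
  let ?Pu = "{e\<in>set (path_edges mp). u \<in> e \<and> e \<notin> set (path_edges (gp y r))}"
  have "{\<epsilon>\<in>E. u \<in> \<epsilon> \<and> \<epsilon> \<notin> set (path_edges (gp y r))} = ?Pu \<union> Off u"
    unfolding Off_def using mp_pe_E gy_sub(2)[OF assms(1)] by auto
  moreover have "?Pu \<inter> Off u = {}" unfolding Off_def by auto
  moreover have "finite ?Pu" "finite (Off u)" using finite_Off by auto
  ultimately show ?thesis unfolding Qcell_def Bv_def by (simp add: prod.union_disjoint)
qed

lemma QT_Inl: assumes "y \<in> set mp" "u \<in> set mp"
  shows "Qcell ET qT (map Inl (gp y r)) (Inl u) = Qcell E q (gp y r) u"
proof -
  have "set (path_edges (map Inl (gp y r))) = (image Inl) ` set (path_edges (gp y r)) \<union> {}"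
    unfolding pe_map by simp
  from QT_general[OF assms _ this] show ?thesis
    unfolding Qcell_T_split[OF assms] using Bv_nav[OF assms(2)] by simp
qed

lemma pe_Inr: assumes "y \<in> set mp"
  shows "path_edges (Inr y # map Inl (gp y r)) = {Inr y, Inl y} # path_edges (map Inl (gp y r))"
proof -
  have yC: "y \<in> C" using assms mp_set by auto
  have g: "map Inl (gp y r) = Inl y # tl (map Inl (gp y r))"
    using gp_hd[OF yC rC] gp_ne[OF yC rC] by (cases "gp y r") auto
  show ?thesis using g by (metis pe_Cons2)
qed

lemma QT_Inr: assumes "y \<in> NAV" "u \<in> set mp"
  shows "Qcell ET qT (Inr y # map Inl (gp y r)) (Inl u) = (if u = y then pp y else Qcell E q (gp y r) u)"
proof -
  have ym: "y \<in> set mp" using assms NAV_PP unfolding PP_def by auto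
  have pe: "set (path_edges (Inr y # map Inl (gp y r))) = (image Inl) ` set (path_edges (gp y r)) \<union> {{Inl y, Inr y}}"
    unfolding pe_Inr[OF ym] pe_map by (auto simp: insert_commute)
  have zs: "{{Inl y, Inr y}} \<subseteq> (\<lambda>v. {Inl v, Inr v :: 'a + 'a}) ` NAV" using assms by auto
  have Q: "Qcell ET qT (Inr y # map Inl (gp y r)) (Inl u) =
    (\<Prod>e\<in>{e\<in>set (path_edges mp). u \<in> e \<and> e \<notin> set (path_edges (gp y r))}. q e u) *
    (if u \<in> NAV \<and> {Inl u, Inr u} \<notin> {{Inl y, Inr y}} then Bv u else 1)"
    by (rule QT_general[OF ym assms(2) zs pe])
  show ?thesis
  proof (cases "u = y")
    case True
    then show ?thesis using Q unfolding pp_def PEd_def by simp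
  next
    case False
    then have "{Inl u, Inr u} \<notin> {{Inl y, Inr y :: 'a + 'a}}" by (auto simp: doubleton_eq_iff)
    then show ?thesis using Q False Qcell_T_split[OF ym assms(2)] Bv_nav[OF assms(2)] by simp
  qed
qed

lemma QT_Inr_self: "Qcell ET qT \<gamma> (Inr y) = 1"
  unfolding Qcell_def using qT_Inr by simp

end



context setting begin

lemma finET: "finite ET" unfolding ET_def NAV_def PP_def by auto

lemma xT_Inl: assumes ym: "y \<in> set mp"
  shows "xval (Inl ` PP) (Inl ` {r} \<union> Inr ` NAV) ET (TX_f f) qT (Inl y) (Inl r) = f r * Xv y"
proof -
  have yC: "y \<in> C" using ym mp_set by auto
  let ?g = "map Inl (gp y r) :: ('a + 'a) list"
  have CT': "Inl ` PP \<union> (Inl ` {r} \<union> Inr ` NAV) = CT" unfolding CT_def ..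
  have gpT: "gpath (Inl ` PP \<union> (Inl ` {r} \<union> Inr ` NAV)) ET (Inl y) (Inl r) = ?g"
    unfolding CT' using gpT_Inl[OF ym] .
  have U: "a = b" if h: "\<epsilon> \<in> ET" "\<epsilon> \<notin> set (path_edges ?g)" "a \<in> set ?g" "b \<in> set ?g" "a \<in> \<epsilon>" "b \<in> \<epsilon>" for \<epsilon> a b
  proof -
    obtain a0 where a0: "a = Inl a0" "a0 \<in> set (gp y r)" using h(3) by auto
    obtain b0 where b0: "b = Inl b0" "b0 \<in> set (gp y r)" using h(4) by auto
    from h(1) consider (L) e where "e \<in> set (path_edges mp)" "\<epsilon> = Inl ` e" | (R) v where "\<epsilon> = {Inl v, Inr v}"
      unfolding ET_def by blast
    then show ?thesis
    proof cases
      case L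
      have "e \<notin> set (path_edges (gp y r))" using L h(2) unfolding pe_map by auto
      moreover have "a0 \<in> e" "b0 \<in> e" using L a0 b0 h(5,6) by auto
      moreover have "e \<in> E" using L mp_pe_E by auto
      ultimately have "a0 = b0" using chord3[OF _ _ _ a0(2) b0(2)] gp_path[OF yC rC] by blast
      then show ?thesis using a0 b0 by simp
    next
      case R then show ?thesis using a0 b0 h(5,6) by auto
    qed
  qed
  have "xval (Inl ` PP) (Inl ` {r} \<union> Inr ` NAV) ET (TX_f f) qT (Inl y) (Inl r)
      = f r * (\<Prod>\<epsilon>\<in>incident_edges ET ?g. q_path qT \<epsilon> ?g)"
    unfolding xval_def gpT Let_def TX_f_def by simp
  also have "(\<Prod>\<epsilon>\<in>incident_edges ET ?g. q_path qT \<epsilon> ?g) = (\<Prod>u\<in>set ?g. Qcell ET qT ?g u)"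
    by (rule inc_prod[OF finET], rule U, assumption+)
  also have "\<dots> = (\<Prod>u\<in>set (gp y r). Qcell ET qT ?g (Inl u))"
    using prod.reindex[of Inl "set (gp y r)" "Qcell ET qT ?g"] by (simp add: inj_on_def)
  also have "\<dots> = Xv y" unfolding Xv_def
    using QT_Inl[OF ym] gy_sub(1)[OF ym] by (intro prod.cong) auto
  finally show ?thesis .
qed

lemma xT_Inr: assumes yN: "y \<in> NAV"
  shows "xval (Inl ` PP) (Inl ` {r} \<union> Inr ` NAV) ET (TX_f f) qT (Inr y) (Inl r) = f r * (pp y * Rv y)"
proof -
  have ym: "y \<in> set mp" using yN NAV_PP unfolding PP_def by auto
  have yC: "y \<in> C" using ym mp_set by auto
  let ?g = "Inr y # map Inl (gp y r) :: ('a + 'a) list"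
  have CT': "Inl ` PP \<union> (Inl ` {r} \<union> Inr ` NAV) = CT" unfolding CT_def ..
  have gpT: "gpath (Inl ` PP \<union> (Inl ` {r} \<union> Inr ` NAV)) ET (Inr y) (Inl r) = ?g"
    unfolding CT' using gpT_Inr[OF yN] .
  have peg: "set (path_edges ?g) = insert {Inr y, Inl y} ((image Inl) ` set (path_edges (gp y r)))"
    unfolding pe_Inr[OF ym] pe_map by simp
  have U: "a = b" if h: "\<epsilon> \<in> ET" "\<epsilon> \<notin> set (path_edges ?g)" "a \<in> set ?g" "b \<in> set ?g" "a \<in> \<epsilon>" "b \<in> \<epsilon>" for \<epsilon> a b
  proof -
    from h(1) consider (L) e where "e \<in> set (path_edges mp)" "\<epsilon> = Inl ` e" | (R) v where "\<epsilon> = {Inl v, Inr v}"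
      unfolding ET_def by blast
    then show ?thesis
    proof cases
      case L
      obtain a0 where a0: "a = Inl a0" "a0 \<in> set (gp y r)" using h(3,5) L by auto
      obtain b0 where b0: "b = Inl b0" "b0 \<in> set (gp y r)" using h(4,6) L by auto
      have "e \<notin> set (path_edges (gp y r))" using L h(2) peg by auto
      moreover have "a0 \<in> e" "b0 \<in> e" using L a0 b0 h(5,6) by auto
      moreover have "e \<in> E" using L mp_pe_E by auto
      ultimately have "a0 = b0" using chord3[OF _ _ _ a0(2) b0(2)] gp_path[OF yC rC] by blast
      then show ?thesis using a0 b0 by simp
    next
      case R
      show ?thesis
      proof (rule ccontr)
        assume "a \<noteq> b"
        then have "Inr v \<in> {a, b}" using R h(5,6) by auto
        then have "Inr v \<in> set ?g" using h(3,4) by auto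
        then have "v = y" by auto
        then have "\<epsilon> \<in> set (path_edges ?g)" using R peg by (auto simp: insert_commute)
        then show False using h(2) by simp
      qed
    qed
  qed
  have "xval (Inl ` PP) (Inl ` {r} \<union> Inr ` NAV) ET (TX_f f) qT (Inr y) (Inl r)
      = f r * (\<Prod>\<epsilon>\<in>incident_edges ET ?g. q_path qT \<epsilon> ?g)"
    unfolding xval_def gpT Let_def TX_f_def by simp
  also have "(\<Prod>\<epsilon>\<in>incident_edges ET ?g. q_path qT \<epsilon> ?g) = (\<Prod>u\<in>set ?g. Qcell ET qT ?g u)"
    by (rule inc_prod[OF finET], rule U, assumption+)
  also have "\<dots> = Qcell ET qT ?g (Inr y) * (\<Prod>u\<in>Inl ` set (gp y r). Qcell ET qT ?g u)"
    by (simp add: prod.insert_if image_iff)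
  also have "(\<Prod>u\<in>Inl ` set (gp y r). Qcell ET qT ?g u) = (\<Prod>u\<in>set (gp y r). Qcell ET qT ?g (Inl u))"
    using prod.reindex[of Inl "set (gp y r)" "Qcell ET qT ?g"] by (simp add: inj_on_def)
  also have "\<dots> = Qcell ET qT ?g (Inl y) * (\<Prod>u\<in>set (tl (gp y r)). Qcell ET qT ?g (Inl u))"
  proof -
    have g: "gp y r = y # tl (gp y r)" using gp_Cons[OF yC rC] .
    have "y \<notin> set (tl (gp y r))" using gp_distinct[OF yC rC] g by (metis distinct.simps(2))
    then show ?thesis by (subst g, simp only: list.set(2), subst prod.insert) auto
  qed
  also have "(\<Prod>u\<in>set (tl (gp y r)). Qcell ET qT ?g (Inl u)) = Rv y"
  proof -
    have g: "gp y r = y # tl (gp y r)" using gp_Cons[OF yC rC] .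
    have yn: "y \<notin> set (tl (gp y r))" using gp_distinct[OF yC rC] g by (metis distinct.simps(2))
    have "set (tl (gp y r)) \<subseteq> set mp" using gy_sub(1)[OF ym] g by (metis set_subset_Cons subset_trans)
    then show ?thesis unfolding Rv_def using QT_Inr[OF yN] yn by (intro prod.cong) auto
  qed
  also have "Qcell ET qT ?g (Inl y) = pp y" using QT_Inr[OF yN ym] by simp
  finally show ?thesis using QT_Inr_self by simp
qed

lemma valT_Inl: assumes "y \<in> set mp"
  shows "valency ET (Inl y) = int (card (PEa y)) + (if y \<in> NAV then 1 else 0)"
proof -
  let ?N = "if y \<in> NAV then {{Inl y, Inr y :: 'a + 'a}} else {}"
  have "{\<epsilon>\<in>ET. Inl y \<in> \<epsilon>} = (image Inl) ` PEa y \<union> ?N"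
    unfolding ET_def PEa_def by auto
  moreover have "(image Inl) ` PEa y \<inter> ?N = {}" by auto
  moreover have "finite (PEa y)" unfolding PEa_def by simp
  moreover have "card ((image (Inl :: 'a \<Rightarrow> 'a + 'a)) ` PEa y) = card (PEa y)" using card_image[OF inj_img] .
  ultimately show ?thesis unfolding valency_def by (simp add: card_Un_disjoint)
qed

lemma valT_Inr: assumes "y \<in> NAV" shows "valency ET (Inr y :: 'a + 'a) = 1"
proof -
  have "{\<epsilon>\<in>ET. (Inr y :: 'a + 'a) \<in> \<epsilon>} = {{Inl y, Inr y}}" unfolding ET_def using assms by auto
  then show ?thesis unfolding valency_def by simp
qed

end



context setting begin

lemma PP_img: "PP = (\<lambda>i. mp ! i) ` {..<nn}"
proof
  show "PP \<subseteq> (\<lambda>i. mp ! i) ` {..<nn}"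
  proof
    fix y assume "y \<in> PP"
    then have y: "y \<in> set mp" "y \<noteq> r" unfolding PP_def by auto
    then obtain i where i: "i < length mp" "mp ! i = y" by (auto simp: in_set_conv_nth)
    then have "i \<noteq> nn" using y mp_last by auto
    then have "i < nn" using i len_mp by simp
    then show "y \<in> (\<lambda>i. mp ! i) ` {..<nn}" using i by auto
  qed
  show "(\<lambda>i. mp ! i) ` {..<nn} \<subseteq> PP"
    using mp_nth_ne_r len_mp unfolding PP_def by auto
qed

lemma PP_inj: "inj_on (\<lambda>i. mp ! i) {..<nn}"
  using mp_distinct len_mp unfolding inj_on_def by (simp add: nth_eq_iff_index_eq)

lemma finPP: "finite PP" unfolding PP_def by simp

lemma Mval_T: assumes fr: "f r = 1"
  shows "Mval (Inl ` PP) (Inl ` {r} \<union> Inr ` NAV) ET (TX_f f) qT = - (\<Sum>i<nn. Phi i)"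
proof -
  let ?A' = "Inl ` {r} \<union> Inr ` NAV :: ('a + 'a) set"
  let ?x = "\<lambda>v. xval (Inl ` PP) ?A' ET (TX_f f) qT v (Inl r)"
  have A0': "A0 ?A' (TX_f f) = Inr ` NAV" unfolding A0_def TX_f_def using fr by auto
  have AA: "?A' - A0 ?A' (TX_f f) = {Inl r}" unfolding A0' by auto
  have N: "Nval (Inl ` PP) ?A' ET (TX_f f) qT v = ?x v" for v
    unfolding Nval_def AA by simp
  let ?F = "\<lambda>y. pp y * Rv y * (Bv y * (int (card (PEa y)) - 1) - 1)"
  have "(\<Sum>v\<in>Inl ` PP \<union> A0 ?A' (TX_f f). Nval (Inl ` PP) ?A' ET (TX_f f) qT v * (valency ET v - 2))
      = (\<Sum>v\<in>Inl ` PP \<union> Inr ` NAV. ?x v * (valency ET v - 2))"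
    unfolding A0' N ..
  also have "\<dots> = (\<Sum>v\<in>Inl ` PP. ?x v * (valency ET v - 2)) + (\<Sum>v\<in>Inr ` NAV. ?x v * (valency ET v - 2))"
    by (rule sum.union_disjoint) (use finPP NAV_PP finite_subset in auto)
  also have "(\<Sum>v\<in>Inl ` PP. ?x v * (valency ET v - 2)) = (\<Sum>y\<in>PP. ?x (Inl y) * (valency ET (Inl y) - 2))"
    by (rule sum.reindex_cong[of Inl]) (auto simp: inj_on_def)
  also have "(\<Sum>v\<in>Inr ` NAV. ?x v * (valency ET v - 2)) = (\<Sum>y\<in>NAV. ?x (Inr y) * (valency ET (Inr y) - 2))"
    by (rule sum.reindex_cong[of Inr]) (auto simp: inj_on_def)
  also have "(\<Sum>y\<in>NAV. ?x (Inr y) * (valency ET (Inr y) - 2)) = (\<Sum>y\<in>NAV. - (pp y * Rv y))"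
    using xT_Inr valT_Inr fr by (intro sum.cong) auto
  also have "\<dots> = (\<Sum>y\<in>PP. if Bv y \<noteq> 1 then - (pp y * Rv y) else 0)"
    unfolding NAV_def using sum.inter_filter[OF finPP] by simp
  also have "(\<Sum>y\<in>PP. ?x (Inl y) * (valency ET (Inl y) - 2)) =
      (\<Sum>y\<in>PP. Xv y * (int (card (PEa y)) + (if Bv y \<noteq> 1 then 1 else 0) - 2))"
  proof (rule sum.cong[OF refl])
    fix y assume y: "y \<in> PP"
    then have ym: "y \<in> set mp" unfolding PP_def by simp
    have "(y \<in> NAV) = (Bv y \<noteq> 1)" using y unfolding NAV_def by simp
    then show "?x (Inl y) * (valency ET (Inl y) - 2) = Xv y * (int (card (PEa y)) + (if Bv y \<noteq> 1 then 1 else 0) - 2)"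
      using xT_Inl[OF ym] valT_Inl[OF ym] fr by simp
  qed
  also have "(\<Sum>y\<in>PP. Xv y * (int (card (PEa y)) + (if Bv y \<noteq> 1 then 1 else 0) - 2)) +
      (\<Sum>y\<in>PP. if Bv y \<noteq> 1 then - (pp y * Rv y) else 0) = (\<Sum>y\<in>PP. ?F y)"
  proof -
    have "Xv y * (int (card (PEa y)) + (if Bv y \<noteq> 1 then 1 else 0) - 2) + (if Bv y \<noteq> 1 then - (pp y * Rv y) else 0) = ?F y"
      if y: "y \<in> PP" for y
    proof -
      obtain i where i: "i < nn" "y = mp ! i" using y PP_img by auto
      have yC: "y \<in> C" using i mp_nth_C by simp
      have X: "Xv y = pp y * Bv y * Rv y" using X_split[OF yC] Qcell_main[of i] i by simp
      show ?thesis unfolding X by (cases "Bv y = 1") (auto simp: algebra_simps)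
    qed
    then show ?thesis by (simp add: sum.distrib[symmetric])
  qed
  also have "(\<Sum>y\<in>PP. ?F y) = (\<Sum>i<nn. ?F (mp ! i))"
    unfolding PP_img by (rule sum.reindex[OF PP_inj, unfolded comp_def])
  also have "\<dots> = (\<Sum>i<nn. Phi i)" using Phi_val by simp
  finally show ?thesis unfolding Mval_def by simp
qed

lemma xval_T: assumes "v \<in> C" shows "xval V A E f q v r = f r * Xv v"
proof -
  have "xval V A E f q v r = f r * (\<Prod>\<epsilon>\<in>incident_edges E (gp v r). q_path q \<epsilon> (gp v r))"
    unfolding xval_def gpC Let_def ..
  also have "(\<Prod>\<epsilon>\<in>incident_edges E (gp v r). q_path q \<epsilon> (gp v r)) = Xv v" unfolding Xv_def
    by (rule inc_prod[OF finE], rule chord3[OF gp_path[OF assms rC, THEN conjunct1]], assumption+)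
  finally show ?thesis .
qed

lemma Qcell_arrow: "a \<in> A \<Longrightarrow> Qcell E q \<gamma> a = 1"
  unfolding Qcell_def using arr_q by (intro prod.neutral) auto

lemma Qstar_X: assumes "\<beta> \<in> A" "\<beta> \<noteq> r" shows "Qstar E q (gp r \<beta>) = Xv \<beta>"
proof -
  have bC: "\<beta> \<in> C" using assms CVA by auto
  let ?g = "gp r \<beta>"
  let ?L = "length ?g"
  let ?h = "\<lambda>i. Qcell E q ?g (?g ! i)"
  have rev: "gp \<beta> r = rev ?g" using gp_rev[OF rC bC] .
  have ne: "?g \<noteq> []" using gp_ne[OF rC bC] .
  have h0: "?g ! 0 = r" using gp_hd[OF rC bC] ne by (simp add: hd_conv_nth)
  have hL: "?g ! (?L - 1) = \<beta>" using gp_last[OF rC bC] ne by (simp add: last_conv_nth)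
  have L2: "?L \<ge> 2"
  proof (rule ccontr)
    assume "\<not> ?L \<ge> 2"
    then have "?L = 1" using ne by (cases ?g) (auto simp: Suc_le_eq)
    then show False using h0 hL assms(2) by simp
  qed
  have "Xv \<beta> = (\<Prod>u\<in>set ?g. Qcell E q ?g u)"
    unfolding Xv_def rev set_rev
    by (intro prod.cong[OF refl] Qcell_eqI) (simp add: pe_rev)
  also have "\<dots> = (\<Prod>i<?L. ?h i)"
  proof -
    have "set ?g = (\<lambda>i. ?g ! i) ` {..<?L}" by (auto simp: in_set_conv_nth)
    moreover have "inj_on (\<lambda>i. ?g ! i) {..<?L}"
      using gp_distinct[OF rC bC] unfolding inj_on_def by (simp add: nth_eq_iff_index_eq)
    ultimately show ?thesis using prod.reindex[of "\<lambda>i. ?g ! i" "{..<?L}" "Qcell E q ?g"] by simp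
  qed
  also have "\<dots> = ?h 0 * (?h (?L - 1) * (\<Prod>i\<in>{1..<?L - 1}. ?h i))"
  proof -
    have "{..<?L} = insert 0 (insert (?L - 1) {1..<?L - 1})" using L2 by auto
    moreover have "0 \<notin> insert (?L - 1) {1..<?L - 1}" using L2 by auto
    moreover have "?L - 1 \<notin> {1..<?L - 1}" by auto
    ultimately show ?thesis by simp
  qed
  also have "?h 0 = 1" using h0 Qcell_arrow rA by simp
  also have "?h (?L - 1) = 1" using hL Qcell_arrow assms(1) by simp
  finally show ?thesis unfolding Qstar_def by simp
qed

end



theorem lemma4p11:
  fixes V A :: "'a set" and E :: "'a set set" and f :: "'a \<Rightarrow> int"
    and q :: "'a set \<Rightarrow> 'a \<Rightarrow> int" and v0 :: 'a and \<alpha> :: 'a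
  assumes "decorated_pseudo_rooted_tree V A E f q v0"
    and "\<forall>\<beta>\<in>A - A0 A f. f \<beta> = 1"
    and "\<alpha> \<in> A - A0 A f"
  shows "Mval (TX_V V A E v0 {\<alpha>}) (TX_A V A E q v0 {\<alpha>}) (TX_E V A E q v0 {\<alpha>})
              (TX_f f) (TX_q V A E q v0 {\<alpha>})
         - Malpha V A E f q \<alpha> = Ival V A E f q \<alpha>"
proof -
  have dt: "decorated_tree V A E f q" and prt: "pseudo_root V A E q v0"
    using assms(1) unfolding decorated_pseudo_rooted_tree_def by auto
  have aA: "\<alpha> \<in> A" and fa: "f \<alpha> = 1" using assms(2,3) by auto
  have finV: "finite V" and finA: "finite A" and VA: "V \<inter> A = {}" and tr: "is_tree (V \<union> A) E"
    using dt unfolding decorated_tree_def by auto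
  interpret S: setting "V \<union> A" E \<alpha> V A q v0
  proof unfold_locales
    show "is_tree (V \<union> A) E" using tr .
    show "\<alpha> \<in> V \<union> A" using aA by simp
    show "V \<union> A = V \<union> A" ..
    show "V \<inter> A = {}" using VA .
    show "\<alpha> \<in> A" using aA .
    show "\<And>a. a \<in> A \<Longrightarrow> valency E a = 1" using dt unfolding decorated_tree_def by auto
    show "\<And>e a. e \<in> E \<Longrightarrow> a \<in> A \<Longrightarrow> a \<in> e \<Longrightarrow> q e a = 1" using dt unfolding decorated_tree_def by auto
    show "v0 \<in> V" using prt unfolding pseudo_root_def by auto
    show "\<And>e. e \<in> E \<Longrightarrow> v0 \<in> e \<Longrightarrow> q e v0 = 1" using prt unfolding pseudo_root_def by auto
    show "\<And>v. v \<in> V - {v0} \<Longrightarrow> card {e \<in> E. v \<in> e \<and> e \<notin> set (path_edges (gpath (V \<union> A) E v0 v)) \<and> q e v \<noteq> 1} \<le> 1"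
      using prt unfolding pseudo_root_def by auto
  qed
  let ?A0 = "A0 A f"
  have LHS: "Mval (TX_V V A E v0 {\<alpha>}) (TX_A V A E q v0 {\<alpha>}) (TX_E V A E q v0 {\<alpha>})
              (TX_f f) (TX_q V A E q v0 {\<alpha>}) = - (\<Sum>i<S.nn. S.Phi i)"
    using S.Mval_T[of f, OF fa] unfolding S.TX_V_eq S.TX_A_eq S.TX_E_eq S.qT_def by simp
  have MA: "Malpha V A E f q \<alpha> = - (\<Sum>v\<in>V \<union> ?A0. S.Xv v * (valency E v - 2))"
  proof -
    have "xval V A E f q v \<alpha> = S.Xv v" if "v \<in> V \<union> ?A0" for v
      using S.xval_T[of v] fa that unfolding A0_def by auto
    then show ?thesis unfolding Malpha_def by simp
  qed
  have IV: "Ival V A E f q \<alpha> = (\<Sum>\<beta>\<in>(A - ?A0) - {\<alpha>}. S.Xv \<beta>)"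
  proof -
    have "Qstar E q (gpath (V \<union> A) E \<alpha> \<beta>) * f \<alpha> * f \<beta> = S.Xv \<beta>" if "\<beta> \<in> (A - ?A0) - {\<alpha>}" for \<beta>
      using S.Qstar_X[of \<beta>] fa assms(2) that by auto
    then show ?thesis unfolding Ival_def by simp
  qed
  have TT: "(\<Sum>w\<in>(V \<union> A) - {\<alpha>}. S.hh w) = (\<Sum>i<S.nn. S.Phi i)" using S.total_T .
  have split: "(V \<union> A) - {\<alpha>} = (V \<union> ?A0) \<union> ((A - ?A0) - {\<alpha>})" using aA fa VA unfolding A0_def by auto
  have disj: "(V \<union> ?A0) \<inter> ((A - ?A0) - {\<alpha>}) = {}" using VA unfolding A0_def by auto
  have fin1: "finite (V \<union> ?A0)" and fin2: "finite ((A - ?A0) - {\<alpha>})" using finV finA unfolding A0_def by auto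
  have "(\<Sum>w\<in>(V \<union> A) - {\<alpha>}. S.hh w) = (\<Sum>w\<in>V \<union> ?A0. S.hh w) + (\<Sum>w\<in>(A - ?A0) - {\<alpha>}. S.hh w)"
    unfolding split by (rule sum.union_disjoint[OF fin1 fin2 disj])
  also have "(\<Sum>w\<in>(A - ?A0) - {\<alpha>}. S.hh w) = - (\<Sum>\<beta>\<in>(A - ?A0) - {\<alpha>}. S.Xv \<beta>)"
  proof -
    have "S.hh \<beta> = - S.Xv \<beta>" if "\<beta> \<in> (A - ?A0) - {\<alpha>}" for \<beta>
      using S.arr_val[of \<beta>] that unfolding S.hh_def by auto
    then show ?thesis by (simp add: sum_negf)
  qed
  finally have "(\<Sum>i<S.nn. S.Phi i) = (\<Sum>w\<in>V \<union> ?A0. S.Xv w * (valency E w - 2)) - (\<Sum>\<beta>\<in>(A - ?A0) - {\<alpha>}. S.Xv \<beta>)"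
    using TT unfolding S.hh_def by simp
  then show ?thesis using LHS MA IV by simp
qed


end
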